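(* $\mathtt{RealTime_{CA}} = \mathtt{pred}$-$\mathtt{ESO}$-$\mathtt{HORN}$. That is, a language $L\subseteq\Sigma^+$ is accepted in real time by a cellular automaton with parallel input, neighborhood $\{-1,0,1\}$ and the first cell as output cell if and only if $L=\{w\in\Sigma^+ : \langle w\rangle\models\Phi\}$ for some predecessor Horn formula $\Phi$.
   Context: Fix a finite alphabet $\Sigma$. A nonempty word $w=w_1\cdots w_n\in\Sigma^n$ is represented by the first-order structure $\langle w\rangle=([1,n];(Q_s)_{s\in\Sigma},\mathtt{min},\mathtt{max},\mathtt{suc},\mathtt{pred})$ with domain $[1,n]=\{1,\dots,n\}$, where $Q_s(i)\iff w_i=s$, $\mathtt{min}(i)\iff i=1$, $\mathtt{max}(i)\iff i=n$, $\mathtt{suc}(i)=i+1$ for $i<n$, $\mathtt{suc}(n)=n$, $\mathtt{pred}(i)=i-1$ for $i>1$, $\mathtt{pred}(1)=1$. Write $x-k$ for $\mathtt{pred}^k(x)$. A predecessor Horn formula is a formula $\Phi=\exists\mathbf{R}\forall x\forall y\,\psi(x,y)$ where $\mathbf{R}$ is a finite set of binary relation symbols (computation predicates) and $\psi$ is a conjunction of Horn clauses in the variables $x,y$ over the signature $\{(Q_s)_{s\in\Sigma},\mathtt{min},\mathtt{max},\mathtt{suc},\mathtt{pred}\}\cup\mathbf{R}$, each of the form $\delta_1\wedge\cdots\wedge\delta_r\to\delta_0$, where $\delta_0$ is either an atom $R(x,y)$ with $R\in\mathbf{R}$ or $\bot$ (false), and each hypothesis $\delta_i$ is one of: $Q_s(x-a)$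 or $Q_s(y-a)$ ($s\in\Sigma$, integer $a\ge0$); $U(x-a)$, $\neg U(x-a)$, $U(y-a)$, $\neg U(y-a)$ ($U\in\{\mathtt{min},\mathtt{max}\}$, integer $a\ge0$); $S(x-a,y-b)$ or $S(y-b,x-a)$ ($S\in\mathbf{R}$, integers $a,b\ge0$). The formula defines the language $\{w\in\Sigma^+:\langle w\rangle\models\Phi\}$, and $\mathtt{pred}$-$\mathtt{ESO}$-$\mathtt{HORN}$ denotes the class of languages so defined. A cellular automaton is $(Q,\Sigma,Q_{accept},\mathcal{N},\delta)$ with finite state set $Q\supseteq\Sigma$, accepting states $Q_{accept}\subseteq Q$, neighborhood $\mathcal{N}$ a finite ordered subset of $\mathbb{Z}$, and transition function $\delta:Q^{|\mathcal N|}\to Q$. On input $w=w_1\cdots w_n$ it works on cells $1,\dots,n$; cells outside $[1,n]$ are permanently in a special state $\sharp$. Writing $\langle c,t\rangle$ for the state of cell $c$ at time $t$, with parallel input $\langle c,1\rangle=w_c$ and $\langle c,t\rangle=\delta(\langle c+v,t-1\rangle: v\in\mathcal N)$ for $t>1$. $\mathtt{RealTime_{CA}}$ is the class of languages $L\subseteq\Sigma^+$ for which there is such an automaton with parallel input and $\mathcal N=\{-1,0,1\}$ such that for every $w\in\Sigma^+$ of length $n$, $w\in L\iff\langle 1,n\rangle\in Q_{accept}$. *)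

theory Defs
  imports Main
begin

text \<open>A nonempty word w = w_1...w_n is a list of length n; position i in [1,n]
  carries the letter w ! (i-1).  pred^a(i) = max 1 (i - a).\<close>

definition predk :: "nat \<Rightarrow> nat \<Rightarrow> nat" where
  "predk a i = max 1 (i - a)"

datatype var = VX | VY

text \<open>HQ s v a : Q_s(v - a);  HMin p v a : min(v - a) if p, else not min(v - a);
  HMax p v a likewise; HRxy S a b : S(x - a, y - b); HRyx S b a : S(y - b, x - a).\<close>

datatype 'a hyp =
    HQ 'a var nat
  | HMin bool var nat
  | HMax bool var nat
  | HRxy nat nat nat
  | HRyx nat nat nat

text \<open>A clause: list of hypotheses and a conclusion, Some R meaning R(x,y), None meaning False.
  A predecessor Horn formula is a finite list of clauses; the computation predicates
  are existentially quantified (those indices occurring in the formula).\<close>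

type_synonym 'a clause = "'a hyp list \<times> nat option"
type_synonym 'a horn_formula = "'a clause list"

definition var_val :: "var \<Rightarrow> nat \<Rightarrow> nat \<Rightarrow> nat" where
  "var_val v x y = (case v of VX \<Rightarrow> x | VY \<Rightarrow> y)"

fun hyp_holds :: "'a list \<Rightarrow> (nat \<Rightarrow> nat \<Rightarrow> nat \<Rightarrow> bool) \<Rightarrow> nat \<Rightarrow> nat \<Rightarrow> 'a hyp \<Rightarrow> bool" where
  "hyp_holds w R x y (HQ s v a) = (w ! (predk a (var_val v x y) - 1) = s)"
| "hyp_holds w R x y (HMin p v a) = ((predk a (var_val v x y) = 1) = p)"
| "hyp_holds w R x y (HMax p v a) = ((predk a (var_val v x y) = length w) = p)"
| "hyp_holds w R x y (HRxy S a b) = R S (predk a x) (predk b y)"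
| "hyp_holds w R x y (HRyx S b a) = R S (predk b y) (predk a x)"

definition clause_holds :: "'a list \<Rightarrow> (nat \<Rightarrow> nat \<Rightarrow> nat \<Rightarrow> bool) \<Rightarrow> nat \<Rightarrow> nat \<Rightarrow> 'a clause \<Rightarrow> bool" where
  "clause_holds w R x y cl =
     ((\<forall>h \<in> set (fst cl). hyp_holds w R x y h) \<longrightarrow>
       (case snd cl of None \<Rightarrow> False | Some S \<Rightarrow> R S x y))"

definition models :: "'a list \<Rightarrow> 'a horn_formula \<Rightarrow> bool" where
  "models w \<Phi> = (\<exists>R :: nat \<Rightarrow> nat \<Rightarrow> nat \<Rightarrow> bool.
      \<forall>x \<in> {1..length w}. \<forall>y \<in> {1..length w}. \<forall>cl \<in> set \<Phi>. clause_holds w R x y cl)"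

definition pred_ESO_HORN :: "('a::finite) list set \<Rightarrow> bool" where
  "pred_ESO_HORN L = (\<exists>\<Phi> :: 'a horn_formula. L = {w. w \<noteq> [] \<and> models w \<Phi>})"

text \<open>States are natural numbers; Q is a finite set of states, the input alphabet is
  embedded into Q by an injective map inp (Q \<supseteq> \<Sigma>), the special border state \<sharp> is None.
  ca_state \<delta> inp w t c is the state of cell c at time t+1 (None outside [1,n]).\<close>

fun ca_state :: "(nat option \<Rightarrow> nat option \<Rightarrow> nat option \<Rightarrow> nat) \<Rightarrow> ('a \<Rightarrow> nat) \<Rightarrow> 'a list
                 \<Rightarrow> nat \<Rightarrow> int \<Rightarrow> nat option" where
  "ca_state \<delta> inp w 0 c =
     (if 1 \<le> c \<and> c \<le> int (length w) then Some (inp (w ! nat (c - 1))) else None)"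
| "ca_state \<delta> inp w (Suc t) c =
     (if 1 \<le> c \<and> c \<le> int (length w)
      then Some (\<delta> (ca_state \<delta> inp w t (c - 1)) (ca_state \<delta> inp w t c) (ca_state \<delta> inp w t (c + 1)))
      else None)"

definition is_CA :: "nat set \<Rightarrow> ('a \<Rightarrow> nat) \<Rightarrow> nat set \<Rightarrow> (nat option \<Rightarrow> nat option \<Rightarrow> nat option \<Rightarrow> nat) \<Rightarrow> bool" where
  "is_CA Q inp Qacc \<delta> =
     (finite Q \<and> inj inp \<and> range inp \<subseteq> Q \<and> Qacc \<subseteq> Q \<and>
      (\<forall>a b c. (a = None \<or> the a \<in> Q) \<longrightarrow> (b = None \<or> the b \<in> Q) \<longrightarrow> (c = None \<or> the c \<in> Q)
                \<longrightarrow> \<delta> a b c \<in> Q))"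

definition RealTime_CA :: "('a::finite) list set \<Rightarrow> bool" where
  "RealTime_CA L = (\<exists>Q (inp :: 'a \<Rightarrow> nat) Qacc \<delta>. is_CA Q inp Qacc \<delta> \<and>
      (\<forall>w. w \<noteq> [] \<longrightarrow> (w \<in> L \<longleftrightarrow> the (ca_state \<delta> inp w (length w - 1) 1) \<in> Qacc)))"

end

theory Submission
  imports Defs
begin


lemma ca_state_in_range:
  assumes "1 \<le> c" "c \<le> int (length w)"
  shows "ca_state \<delta> inp w t c \<noteq> None"
  using assms by (cases t) auto

lemma ca_state_out_range:
  assumes "\<not> (1 \<le> c \<and> c \<le> int (length w))"
  shows "ca_state \<delta> inp w t c = None"
  using assms by (cases t) auto

lemma ca_state_in_Q:
  assumes "is_CA Q inp Qacc \<delta>"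
  shows "ca_state \<delta> inp w t c = None \<or> the (ca_state \<delta> inp w t c) \<in> Q"
proof (induction t arbitrary: c)
  case 0
  then show ?case using assms unfolding is_CA_def by auto
next
  case (Suc t)
  have cl: "\<And>a b c. (a = None \<or> the a \<in> Q) \<Longrightarrow> (b = None \<or> the b \<in> Q) \<Longrightarrow> (c = None \<or> the c \<in> Q) \<Longrightarrow> \<delta> a b c \<in> Q"
    using assms unfolding is_CA_def by blast
  show ?case using cl[OF Suc.IH Suc.IH Suc.IH] by simp
qed

definition ca_formula :: "nat list \<Rightarrow> 'a list \<Rightarrow> ('a \<Rightarrow> nat) \<Rightarrow> nat set \<Rightarrow> (nat option \<Rightarrow> nat option \<Rightarrow> nat option \<Rightarrow> nat) \<Rightarrow> 'a horn_formula" where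
 "ca_formula qs ls inp Qacc \<delta> =
   [([HMin True VX 0, HMin True VY 0], Some 0),
    ([HMin False VX 0, HMin False VY 0, HRxy 0 1 1], Some 0),
    ([HMin True VY 0, HMin False VX 0], Some 1),
    ([HMin False VY 0, HRxy 1 1 1], Some 1)]
   @ map (\<lambda>s. ([HMin True VY 0, HQ s VX 0], Some (inp s + 2))) ls
   @ concat (map (\<lambda>q1. map (\<lambda>q2. ([HMin False VY 0, HRxy 0 0 0, HRxy (q1+2) 1 1, HRxy (q2+2) 0 1],
         Some (\<delta> None (Some q1) (Some q2) + 2))) qs) qs)
   @ concat (map (\<lambda>q0. concat (map (\<lambda>q1. map (\<lambda>q2. ([HMin False VY 0, HRxy 1 0 0, HRxy (q0+2) 2 1, HRxy (q1+2) 1 1, HRxy (q2+2) 0 1],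
         Some (\<delta> (Some q0) (Some q1) (Some q2) + 2))) qs) qs)) qs)
   @ map (\<lambda>q. ([HMax True VX 0, HMax True VY 0, HRxy (q+2) 0 0], None)) (filter (\<lambda>q. q \<notin> Qacc) qs)"

definition truthR :: "(nat option \<Rightarrow> nat option \<Rightarrow> nat option \<Rightarrow> nat) \<Rightarrow> ('a \<Rightarrow> nat) \<Rightarrow> 'a list \<Rightarrow> nat \<Rightarrow> nat \<Rightarrow> nat \<Rightarrow> bool" where
  "truthR \<delta> inp w S x y = (if S = 0 then x = y else if S = 1 then y < x
      else y \<le> x \<and> ca_state \<delta> inp w (y-1) (int x - int y + 1) = Some (S-2))"

lemma nat_int_m1[simp]: "nat (int x - 1) = x - 1" by arith

lemma predk0[simp]: "1 \<le> x \<Longrightarrow> predk 0 x = x" by (simp add: predk_def)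
lemma predk_eq1: "predk a x = 1 \<longleftrightarrow> x \<le> a + 1" by (auto simp add: predk_def)
lemma predk_sub: "a + 1 \<le> x \<Longrightarrow> predk a x = x - a" by (simp add: predk_def)

lemma ca_Suc_in:
  "1 \<le> c \<Longrightarrow> c \<le> int (length w) \<Longrightarrow> ca_state \<delta> inp w (Suc t) c =
     Some (\<delta> (ca_state \<delta> inp w t (c - 1)) (ca_state \<delta> inp w t c) (ca_state \<delta> inp w t (c + 1)))"
  by simp

lemma ca_sound:
  assumes acc: "the (ca_state \<delta> inp w (length w - 1) 1) \<in> Qacc" and ne: "w \<noteq> []"
    and x: "x \<in> {1..length w}" and y: "y \<in> {1..length w}"
    and cl: "cl \<in> set (ca_formula qs ls inp Qacc \<delta>)"
  shows "clause_holds w (truthR \<delta> inp w) x y cl"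
proof -
  let ?R = "truthR \<delta> inp w"
  let ?n = "length w"
  from x y have x1: "1 \<le> x" "x \<le> ?n" and y1: "1 \<le> y" "y \<le> ?n" by auto
  from cl consider
      "cl = ([HMin True VX 0, HMin True VY 0], Some 0)"
    | "cl = ([HMin False VX 0, HMin False VY 0, HRxy 0 1 1], Some 0)"
    | "cl = ([HMin True VY 0, HMin False VX 0], Some 1)"
    | "cl = ([HMin False VY 0, HRxy 1 1 1], Some 1)"
    | s where "cl = ([HMin True VY 0, HQ s VX 0], Some (inp s + 2))"
    | q1 q2 where "cl = ([HMin False VY 0, HRxy 0 0 0, HRxy (q1+2) 1 1, HRxy (q2+2) 0 1],
         Some (\<delta> None (Some q1) (Some q2) + 2))"
    | q0 q1 q2 where "cl = ([HMin False VY 0, HRxy 1 0 0, HRxy (q0+2) 2 1, HRxy (q1+2) 1 1, HRxy (q2+2) 0 1],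
         Some (\<delta> (Some q0) (Some q1) (Some q2) + 2))"
    | q where "q \<notin> Qacc" "cl = ([HMax True VX 0, HMax True VY 0, HRxy (q+2) 0 0], None)"
    unfolding ca_formula_def by auto
  then show ?thesis
  proof cases
    case 1 then show ?thesis using x1 y1 by (auto simp: clause_holds_def var_val_def truthR_def)
  next
    case 2 then show ?thesis using x1 y1 by (auto simp: clause_holds_def var_val_def truthR_def predk_def)
  next
    case 3 then show ?thesis using x1 y1 by (auto simp: clause_holds_def var_val_def truthR_def predk_def)
  next
    case 4 then show ?thesis using x1 y1 by (auto simp: clause_holds_def var_val_def truthR_def predk_def)
  next
    case 5 then show ?thesis using x1 y1 by (auto simp: clause_holds_def var_val_def truthR_def predk_def)
  next
    case 6
    show ?thesis unfolding clause_holds_def 6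
    proof (intro impI)
      assume h: "\<forall>h\<in>set (fst ([HMin False VY 0, HRxy 0 0 0, HRxy (q1 + 2) 1 1, HRxy (q2 + 2) 0 1],
         Some (\<delta> None (Some q1) (Some q2) + 2))). hyp_holds w ?R x y h"
      have y2: "2 \<le> y" using h y1 by (auto simp: var_val_def)
      have xy: "x = y" using h x1 y1 by (auto simp: var_val_def truthR_def)
      have "?R (q1+2) (predk 1 x) (predk 1 y)" "?R (q2+2) (predk 0 x) (predk 1 y)" using h by auto
      obtain k where k: "y = k + 2" using y2 by (metis le_add_diff_inverse2)
      then have a: "ca_state \<delta> inp w k 1 = Some q1" "ca_state \<delta> inp w k 2 = Some q2"
        using \<open>?R (q1+2) (predk 1 x) (predk 1 y)\<close> \<open>?R (q2+2) (predk 0 x) (predk 1 y)\<close> xy y2 x1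
        by (auto simp: truthR_def predk_sub)
      have e: "y - 1 = Suc k" using k by simp
      have "ca_state \<delta> inp w (y-1) 1 = Some (\<delta> None (Some q1) (Some q2))"
        unfolding e using a ne ca_state_out_range[of 0 w \<delta> inp k] by (simp add: Suc_le_eq)
      then show "case snd ([HMin False VY 0, HRxy 0 0 0, HRxy (q1 + 2) 1 1, HRxy (q2 + 2) 0 1],
         Some (\<delta> None (Some q1) (Some q2) + 2)) of None \<Rightarrow> False | Some S \<Rightarrow> ?R S x y"
        using xy by (simp add: truthR_def)
    qed
  next
    case 7
    show ?thesis unfolding clause_holds_def 7
    proof (intro impI)
      assume h: "\<forall>h\<in>set (fst ([HMin False VY 0, HRxy 1 0 0, HRxy (q0+2) 2 1, HRxy (q1+2) 1 1, HRxy (q2+2) 0 1],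
         Some (\<delta> (Some q0) (Some q1) (Some q2) + 2))). hyp_holds w ?R x y h"
      have y2: "2 \<le> y" using h y1 by (auto simp: var_val_def)
      have xy: "y < x" using h x1 y1 by (auto simp: var_val_def truthR_def)
      have "?R (q0+2) (predk 2 x) (predk 1 y)" "?R (q1+2) (predk 1 x) (predk 1 y)" "?R (q2+2) (predk 0 x) (predk 1 y)" using h by auto
      note hh = this
      obtain k where k: "y = k + 2" using y2 by (metis le_add_diff_inverse2)
      have a: "ca_state \<delta> inp w k (int x - int y) = Some q0"
         "ca_state \<delta> inp w k (int x - int y + 1) = Some q1"
         "ca_state \<delta> inp w k (int x - int y + 2) = Some q2"
        using hh k xy y2 x1 by (auto simp: truthR_def predk_sub of_nat_diff algebra_simps)
      have e: "y - 1 = Suc k" using k by simp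
      have "ca_state \<delta> inp w (y-1) (int x - int y + 1) = Some (\<delta> (Some q0) (Some q1) (Some q2))"
        unfolding e using a xy x1 y1 by (simp add: algebra_simps)
      then show "case snd ([HMin False VY 0, HRxy 1 0 0, HRxy (q0+2) 2 1, HRxy (q1+2) 1 1, HRxy (q2+2) 0 1],
         Some (\<delta> (Some q0) (Some q1) (Some q2) + 2)) of None \<Rightarrow> False | Some S \<Rightarrow> ?R S x y"
        using xy by (simp add: truthR_def)
    qed
  next
    case 8
    show ?thesis unfolding clause_holds_def 8
    proof (intro impI)
      assume h: "\<forall>h\<in>set (fst ([HMax True VX 0, HMax True VY 0, HRxy (q+2) 0 0], None :: nat option)). hyp_holds w ?R x y h"
      then have "x = ?n" "y = ?n" "?R (q+2) x y" using x1 y1 by (auto simp: var_val_def)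
      then have "ca_state \<delta> inp w (?n - 1) 1 = Some q" by (simp add: truthR_def)
      then show "case snd ([HMax True VX 0, HMax True VY 0, HRxy (q+2) 0 0], None :: nat option) of None \<Rightarrow> False | Some S \<Rightarrow> ?R S x y"
        using acc 8 by simp
    qed
  qed
qed

lemma use_clause: "clause_holds w R x y (hs, Some S) \<Longrightarrow> (\<forall>h\<in>set hs. hyp_holds w R x y h) \<Longrightarrow> R S x y"
  by (simp add: clause_holds_def)

locale ca_compl =
  fixes Q inp Qacc \<delta> w qs ls R
  assumes ca: "is_CA Q inp Qacc \<delta>"
    and qs: "set qs = Q" and ls: "set ls = UNIV"
    and ne: "w \<noteq> []"
    and mod: "\<forall>x\<in>{1..length w}. \<forall>y\<in>{1..length w}. \<forall>cl\<in>set (ca_formula qs ls inp Qacc \<delta>). clause_holds w R x y cl"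
begin

lemma cl: "cl \<in> set (ca_formula qs ls inp Qacc \<delta>) \<Longrightarrow> 1 \<le> x \<Longrightarrow> x \<le> length w \<Longrightarrow> 1 \<le> y \<Longrightarrow> y \<le> length w
   \<Longrightarrow> clause_holds w R x y cl"
  using mod by auto

lemma eqR: "1 \<le> x \<Longrightarrow> x \<le> length w \<Longrightarrow> R 0 x x"
proof (induction x)
  case 0 then show ?case by simp
next
  case (Suc x)
  show ?case
  proof (cases "x = 0")
    case True
    have "clause_holds w R 1 1 ([HMin True VX 0, HMin True VY 0], Some 0)"
      by (rule cl) (use Suc in \<open>auto simp: ca_formula_def\<close>)
    then show ?thesis using True by (auto simp: clause_holds_def var_val_def)
  next
    case False
    have c: "clause_holds w R (Suc x) (Suc x) ([HMin False VX 0, HMin False VY 0, HRxy 0 1 1], Some 0)"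
      by (rule cl) (use Suc in \<open>auto simp: ca_formula_def\<close>)
    have "R 0 x x" using Suc False by simp
    then show ?thesis using use_clause[OF c] False by (auto simp: var_val_def predk_def)
  qed
qed

lemma gtR: "1 \<le> y \<Longrightarrow> y < x \<Longrightarrow> x \<le> length w \<Longrightarrow> R 1 x y"
proof (induction y arbitrary: x)
  case 0 then show ?case by simp
next
  case (Suc y)
  show ?case
  proof (cases "y = 0")
    case True
    have c: "clause_holds w R x 1 ([HMin True VY 0, HMin False VX 0], Some 1)"
      by (rule cl) (use Suc in \<open>auto simp: ca_formula_def\<close>)
    then show ?thesis using True Suc by (auto simp: clause_holds_def var_val_def predk_def)
  next
    case False
    have c: "clause_holds w R x (Suc y) ([HMin False VY 0, HRxy 1 1 1], Some 1)"
      by (rule cl) (use Suc in \<open>auto simp: ca_formula_def\<close>)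
    have "R 1 (x - 1) y" using Suc False by simp
    then show ?thesis using use_clause[OF c] False Suc by (auto simp: var_val_def predk_def max_def)
  qed
qed

definition st :: "nat \<Rightarrow> nat \<Rightarrow> nat" where
  "st x y = the (ca_state \<delta> inp w (y-1) (int x - int y + 1))"

lemma st_Q: "1 \<le> y \<Longrightarrow> y \<le> x \<Longrightarrow> x \<le> length w \<Longrightarrow> st x y \<in> Q \<and> ca_state \<delta> inp w (y-1) (int x - int y + 1) = Some (st x y)"
  using ca_state_in_Q[OF ca, of w "y-1" "int x - int y + 1"] ca_state_in_range[of "int x - int y + 1" w \<delta> inp "y-1"]
  unfolding st_def by auto

lemma stR: "1 \<le> y \<Longrightarrow> y \<le> x \<Longrightarrow> x \<le> length w \<Longrightarrow> R (st x y + 2) x y"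
proof (induction y arbitrary: x)
  case 0 then show ?case by simp
next
  case (Suc y)
  show ?case
  proof (cases "y = 0")
    case True
    have c: "clause_holds w R x 1 ([HMin True VY 0, HQ (w ! (x-1)) VX 0], Some (inp (w ! (x-1)) + 2))"
      by (rule cl) (use Suc ls in \<open>auto simp: ca_formula_def\<close>)
    have "st x 1 = inp (w ! (x-1))" using Suc by (simp add: st_def)
    then show ?thesis using use_clause[OF c] True Suc by (auto simp: var_val_def predk_def max_def)
  next
    case False
    show ?thesis
    proof (cases "x = Suc y")
      case True
      let ?q1 = "st y y" and ?q2 = "st (y+1) y"
      have q: "?q1 \<in> Q" "?q2 \<in> Q" using st_Q[of y y] st_Q[of y "y+1"] Suc False True by auto
      have c: "clause_holds w R x (Suc y) ([HMin False VY 0, HRxy 0 0 0, HRxy (?q1+2) 1 1, HRxy (?q2+2) 0 1],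
         Some (\<delta> None (Some ?q1) (Some ?q2) + 2))"
        by (rule cl) (use Suc q qs in \<open>auto simp: ca_formula_def\<close>)
      have h: "R 0 x (Suc y)" "R (?q1+2) y y" "R (?q2+2) (y+1) y"
        using eqR[of x] Suc.IH[of y] Suc.IH[of "y+1"] Suc False True by auto
      obtain k where k: "y = Suc k" using False by (cases y) auto
      have e: "st x (Suc y) = \<delta> None (Some ?q1) (Some ?q2)"
        using st_Q[of y y] st_Q[of y "y+1"] Suc False True ne
          ca_state_out_range[of 0 w \<delta> inp "y-1"] k
        by (auto simp: st_def)
      show ?thesis using use_clause[OF c] h False True e by (auto simp: var_val_def predk_def max_def)
    next
      case False2: False
      let ?q0 = "st (x-2) y" and ?q1 = "st (x-1) y" and ?q2 = "st x y"
      have q: "?q0 \<in> Q" "?q1 \<in> Q" "?q2 \<in> Q" using st_Q[of y "x-2"] st_Q[of y "x-1"] st_Q[of y x] Suc False False2 by auto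
      have c: "clause_holds w R x (Suc y) ([HMin False VY 0, HRxy 1 0 0, HRxy (?q0+2) 2 1, HRxy (?q1+2) 1 1, HRxy (?q2+2) 0 1],
         Some (\<delta> (Some ?q0) (Some ?q1) (Some ?q2) + 2))"
        by (rule cl) (use Suc q qs in \<open>auto simp: ca_formula_def\<close>)
      have h: "R 1 x (Suc y)" "R (?q0+2) (x-2) y" "R (?q1+2) (x-1) y" "R (?q2+2) x y"
        using gtR[of "Suc y" x] Suc.IH[of "x-2"] Suc.IH[of "x-1"] Suc.IH[of x] Suc False False2 by auto
      have s: "ca_state \<delta> inp w (y-1) (int (x-2) - int y + 1) = Some ?q0"
              "ca_state \<delta> inp w (y-1) (int (x-1) - int y + 1) = Some ?q1"
              "ca_state \<delta> inp w (y-1) (int x - int y + 1) = Some ?q2"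
        using st_Q[of y "x-2"] st_Q[of y "x-1"] st_Q[of y x] Suc False False2 by auto
      obtain k where k: "y = Suc k" using False by (cases y) auto
      have "int (x-2) - int y + 1 = int x - int (Suc y) + 1 - 1" "int (x-1) - int y + 1 = int x - int (Suc y) + 1"
           "int x - int y + 1 = int x - int (Suc y) + 1 + 1"
        using Suc False2 by auto
      then have s2: "ca_state \<delta> inp w k (int x - int (Suc y) + 1 - 1) = Some ?q0"
              "ca_state \<delta> inp w k (int x - int (Suc y) + 1) = Some ?q1"
              "ca_state \<delta> inp w k (int x - int (Suc y) + 1 + 1) = Some ?q2"
        using s k by auto
      have e: "st x (Suc y) = \<delta> (Some ?q0) (Some ?q1) (Some ?q2)"
        unfolding st_def using s2 k Suc False2 by simp
      have pk: "predk 2 x = x - 2" "predk 1 x = x - 1" "predk 1 (Suc y) = y" using Suc False False2 by (auto simp: predk_def)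
      show ?thesis using use_clause[OF c] h False pk e Suc by (auto simp: var_val_def)
    qed
  qed
qed

lemma accepts: "the (ca_state \<delta> inp w (length w - 1) 1) \<in> Qacc"
proof (rule ccontr)
  assume na: "the (ca_state \<delta> inp w (length w - 1) 1) \<notin> Qacc"
  let ?n = "length w"
  have n1: "1 \<le> ?n" using ne by (simp add: Suc_le_eq)
  have sq: "st ?n ?n \<in> Q" using st_Q[of ?n ?n] n1 by auto
  have e: "st ?n ?n = the (ca_state \<delta> inp w (length w - 1) 1)" by (simp add: st_def)
  have c: "clause_holds w R ?n ?n ([HMax True VX 0, HMax True VY 0, HRxy (st ?n ?n+2) 0 0], None)"
    by (rule cl) (use sq qs na e n1 in \<open>auto simp: ca_formula_def\<close>)
  have "R (st ?n ?n + 2) ?n ?n" using stR[of ?n ?n] n1 by auto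
  then show False using c n1 by (auto simp: clause_holds_def var_val_def)
qed

end

lemma RT_imp_horn:
  fixes L :: "('a::finite) list set"
  assumes L: "L \<subseteq> {w. w \<noteq> []}" and rt: "RealTime_CA L"
  shows "pred_ESO_HORN L"
proof -
  obtain Q and inp :: "'a \<Rightarrow> nat" and Qacc \<delta> where ca: "is_CA Q inp Qacc \<delta>"
    and acc: "\<forall>w. w \<noteq> [] \<longrightarrow> (w \<in> L \<longleftrightarrow> the (ca_state \<delta> inp w (length w - 1) 1) \<in> Qacc)"
    using rt unfolding RealTime_CA_def by blast
  obtain ls :: "'a list" where ls: "set ls = UNIV" using finite_list[of "UNIV :: 'a set"] by auto
  define qs where "qs = sorted_list_of_set Q"
  have qs: "set qs = Q" using ca unfolding is_CA_def qs_def by auto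
  let ?\<Phi> = "ca_formula qs ls inp Qacc \<delta>"
  have "L = {w. w \<noteq> [] \<and> models w ?\<Phi>}"
  proof (intro set_eqI iffI)
    fix w assume w: "w \<in> L"
    then have ne: "w \<noteq> []" using L by auto
    have "the (ca_state \<delta> inp w (length w - 1) 1) \<in> Qacc" using acc ne w by auto
    then have "models w ?\<Phi>" unfolding models_def using ca_sound[OF _ ne] by blast
    then show "w \<in> {w. w \<noteq> [] \<and> models w ?\<Phi>}" using ne by auto
  next
    fix w assume "w \<in> {w. w \<noteq> [] \<and> models w ?\<Phi>}"
    then have ne: "w \<noteq> []" and m: "models w ?\<Phi>" by auto
    then obtain R where "\<forall>x\<in>{1..length w}. \<forall>y\<in>{1..length w}. \<forall>cl\<in>set ?\<Phi>. clause_holds w R x y cl"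
      unfolding models_def by blast
    then interpret ca_compl Q inp Qacc \<delta> w qs ls R using ca qs ls ne by unfold_locales auto
    show "w \<in> L" using accepts acc ne by auto
  qed
  then show ?thesis unfolding pred_ESO_HORN_def by blast
qed



fun Vr :: "(bool \<Rightarrow> bool \<Rightarrow> bool \<Rightarrow> 'a \<Rightarrow> 'a \<Rightarrow> 'v \<Rightarrow> 'v \<Rightarrow> 'v) \<Rightarrow> 'v \<Rightarrow> 'a list \<Rightarrow> nat \<Rightarrow> nat \<Rightarrow> bool \<Rightarrow> 'v" where
  "Vr f d w x y b = f (x \<le> 1) (y \<le> x) b (w!(x-1)) (w!(y-1))
      (if x \<le> 1 then d else Vr f d w (x-1) y b) (if y \<le> x then d else Vr f d w x (y-1) False)"

declare Vr.simps[simp del]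

definition gfil :: "(bool \<Rightarrow> bool \<Rightarrow> bool \<Rightarrow> 'a \<Rightarrow> 'a \<Rightarrow> 'v \<Rightarrow> 'v \<Rightarrow> 'v) \<Rightarrow> 'v \<Rightarrow> bool \<Rightarrow> bool \<Rightarrow> bool \<Rightarrow> 'a \<Rightarrow> 'a \<Rightarrow> 'v \<Rightarrow> 'v \<Rightarrow> 'v" where
  "gfil f d x1 xy b a c l dn = f x1 xy b a c (if x1 then d else l) (if xy then d else dn)"

lemma Vr_g:
  assumes "\<not> x \<le> 1 \<Longrightarrow> l = Vr f d w (x-1) y b" "\<not> y \<le> x \<Longrightarrow> dn = Vr f d w x (y-1) False"
  shows "Vr f d w x y b = gfil f d (x \<le> 1) (y \<le> x) b (w!(x-1)) (w!(y-1)) l dn"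
  using assms by (simp add: gfil_def Vr.simps[of f d w x y b])

datatype ('a, 'v) cst = Lt 'a | Cp 'a 'a bool 'v 'v

definition SS :: "'v set \<Rightarrow> ('a, 'v) cst set" where
  "SS Vals = range Lt \<union> (\<lambda>(l, r, s, a, b). Cp l r s a b) ` (UNIV \<times> UNIV \<times> UNIV \<times> Vals \<times> Vals)"

lemma LtS: "Lt s \<in> SS Vals" by (simp add: SS_def)

lemma CpS: "a \<in> Vals \<Longrightarrow> b \<in> Vals \<Longrightarrow> Cp l r s a b \<in> SS Vals"
  unfolding SS_def by (rule UnI2) (rule image_eqI[where x = "(l, r, s, a, b)"], auto)

locale grid =
  fixes f :: "bool \<Rightarrow> bool \<Rightarrow> bool \<Rightarrow> 'a \<Rightarrow> 'a \<Rightarrow> 'v \<Rightarrow> 'v \<Rightarrow> 'v" and d :: 'v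
begin

abbreviation "g \<equiv> gfil f d"

fun vl :: "('a, 'v) cst \<Rightarrow> 'a" where
  "vl (Lt s) = s" | "vl (Cp l r s a b) = l"
fun vr :: "('a, 'v) cst \<Rightarrow> 'a" where
  "vr (Lt s) = s" | "vr (Cp l r s a b) = r"
fun vs :: "('a, 'v) cst \<Rightarrow> bool" where
  "vs (Lt s) = False" | "vs (Cp l r s a b) = s"
fun ve :: "bool \<Rightarrow> ('a, 'v) cst \<Rightarrow> 'v" where
  "ve b (Lt s) = f True True b s s d d" | "ve b (Cp l r s et ef) = (if b then et else ef)"

definition step :: "('a, 'v) cst option \<Rightarrow> ('a, 'v) cst option \<Rightarrow> ('a, 'v) cst option \<Rightarrow> ('a, 'v) cst" where
  "step L C R = (case C of None \<Rightarrow> Lt undefined | Some c \<Rightarrow>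
     (let first = (L = None);
          ln = (case R of None \<Rightarrow> vl c | Some r \<Rightarrow> vl r);
          sn = (case L of None \<Rightarrow> True | Some l \<Rightarrow> vs l);
          rn = (case L of None \<Rightarrow> ln | Some l \<Rightarrow> vr l);
          OF = g (\<not> sn) False False rn (vl c) (ve False c) (case L of None \<Rightarrow> d | Some l \<Rightarrow> ve False l);
          Ob = (\<lambda>b. g (\<not> vs c) False b (vr c) ln (case R of None \<Rightarrow> d | Some r \<Rightarrow> ve b r) (ve False c));
          E = (\<lambda>b. g (\<not> sn) first b rn ln (Ob b) OF)
      in Cp ln rn sn (E True) (E False)))"

fun ast :: "'a list \<Rightarrow> nat \<Rightarrow> int \<Rightarrow> ('a, 'v) cst option" where
  "ast w 0 c = (if 1 \<le> c \<and> c \<le> int (length w) then Some (Lt (w ! nat (c - 1))) else None)"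
| "ast w (Suc t) c = (if 1 \<le> c \<and> c \<le> int (length w)
      then Some (step (ast w t (c - 1)) (ast w t c) (ast w t (c + 1))) else None)"

lemma ast_some: "1 \<le> k \<Longrightarrow> k \<le> length w \<Longrightarrow> \<exists>s. ast w t (int k) = Some s"
  by (cases t) auto

lemma ast_none: "\<not> (1 \<le> c \<and> c \<le> int (length w)) \<Longrightarrow> ast w t c = None"
  by (cases t) auto

definition inv :: "'a list \<Rightarrow> nat \<Rightarrow> nat \<Rightarrow> ('a, 'v) cst \<Rightarrow> bool" where
  "inv w t k s \<longleftrightarrow>
     (k + t \<le> length w \<longrightarrow> vl s = w ! (k + t - 1)) \<and>
     (k \<le> t + 1 \<and> t + 2 - k \<le> length w \<longrightarrow> vr s = w ! (t + 1 - k)) \<and>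
     (vs s \<longleftrightarrow> k \<le> t) \<and>
     (\<forall>b. k \<le> t + 1 \<and> t + k \<le> length w \<longrightarrow> ve b s = Vr f d w (t + 2 - k) (t + k) b)"

lemma inv_base:
  assumes "1 \<le> k" "k \<le> length w"
  shows "inv w 0 k (Lt (w ! (k - 1)))"
  using assms unfolding inv_def by (auto simp: Vr.simps[of f d w "Suc 0" "Suc 0"])

lemma invD:
  assumes "inv w t k s"
  shows "k + t \<le> length w \<Longrightarrow> P = k + t - 1 \<Longrightarrow> vl s = w ! P"
    and "k \<le> t + 1 \<Longrightarrow> t + 2 - k \<le> length w \<Longrightarrow> P = t + 1 - k \<Longrightarrow> vr s = w ! P"
    and "vs s \<longleftrightarrow> k \<le> t"
    and "k \<le> t + 1 \<Longrightarrow> t + k \<le> length w \<Longrightarrow> X = t + 2 - k \<Longrightarrow> Y = t + k \<Longrightarrow> ve b s = Vr f d w X Y b"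
  using assms unfolding inv_def by auto

lemma inv_step:
  assumes k: "1 \<le> k" "k \<le> length w"
    and C: "inv w t k c"
    and L: "k = 1 \<Longrightarrow> L = None" "2 \<le> k \<Longrightarrow> \<exists>l. L = Some l \<and> inv w t (k-1) l"
    and R: "k = length w \<Longrightarrow> R = None" "k < length w \<Longrightarrow> \<exists>r. R = Some r \<and> inv w t (k+1) r"
  shows "inv w (Suc t) k (step L (Some c) R)"
proof -
  let ?n = "length w"
  define first where "first = (L = None)"
  define ln where "ln = (case R of None \<Rightarrow> vl c | Some r \<Rightarrow> vl r)"
  define sn where "sn = (case L of None \<Rightarrow> True | Some l \<Rightarrow> vs l)"
  define rn where "rn = (case L of None \<Rightarrow> ln | Some l \<Rightarrow> vr l)"
  define OF where "OF = g (\<not> sn) False False rn (vl c) (ve False c) (case L of None \<Rightarrow> d | Some l \<Rightarrow> ve False l)"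
  define Ob where "Ob = (\<lambda>b. g (\<not> vs c) False b (vr c) ln (case R of None \<Rightarrow> d | Some r \<Rightarrow> ve b r) (ve False c))"
  define E where "E = (\<lambda>b. g (\<not> sn) first b rn ln (Ob b) OF)"
  have st: "step L (Some c) R = Cp ln rn sn (E True) (E False)"
    unfolding step_def first_def ln_def sn_def rn_def OF_def Ob_def E_def Let_def by simp
  have first: "first \<longleftrightarrow> k = 1" using L k unfolding first_def by (cases "k = 1") auto
  have ln: "k + Suc t \<le> ?n \<Longrightarrow> ln = w ! (k + t)"
  proof -
    assume a: "k + Suc t \<le> ?n"
    then obtain r where r: "R = Some r" "inv w t (k+1) r" using R by auto
    show ?thesis unfolding ln_def r(1) using invD(1)[OF r(2)] a by simp
  qed
  have sn: "sn \<longleftrightarrow> k \<le> Suc t"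
  proof (cases "k = 1")
    case True then show ?thesis using L unfolding sn_def by simp
  next
    case False
    then obtain l where l: "L = Some l" "inv w t (k-1) l" using L k by auto
    show ?thesis unfolding sn_def l(1) using invD(3)[OF l(2)] False k by auto
  qed
  have rn: "k \<le> Suc t + 1 \<Longrightarrow> Suc t + 2 - k \<le> ?n \<Longrightarrow> rn = w ! (Suc t + 1 - k)"
  proof (cases "k = 1")
    case True
    assume a: "k \<le> Suc t + 1" "Suc t + 2 - k \<le> ?n"
    then show ?thesis using L(1)[OF True] ln True unfolding rn_def by simp
  next
    case False
    assume a: "k \<le> Suc t + 1" "Suc t + 2 - k \<le> ?n"
    obtain l where l: "L = Some l" "inv w t (k-1) l" using L k False by auto
    show ?thesis unfolding rn_def l(1) using invD(2)[OF l(2)] a False k by simp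
  qed
  have E: "ve b (Cp ln rn sn (E True) (E False)) = Vr f d w (Suc t + 2 - k) (Suc t + k) b"
    if a: "k \<le> Suc t + 1" "Suc t + k \<le> ?n" for b
  proof -
    have knr: "k < ?n" using a by simp
    obtain r where r: "R = Some r" "inv w t (k+1) r" using R(2)[OF knr] by auto
    have Obb: "Ob b = Vr f d w (t + 2 - k) (t + 1 + k) b" if kt: "k \<le> t + 1"
    proof -
      have "Vr f d w (t + 2 - k) (t + 1 + k) b = g (t + 2 - k \<le> 1) (t + 1 + k \<le> t + 2 - k) b (w!(t + 2 - k - 1)) (w!(t + 1 + k - 1))
          (ve b r) (ve False c)"
      proof (rule Vr_g)
        assume "\<not> t + 2 - k \<le> 1"
        then show "ve b r = Vr f d w (t + 2 - k - 1) (t + 1 + k) b"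
          using invD(4)[OF r(2)] a by simp
      next
        show "ve False c = Vr f d w (t + 2 - k) (t + 1 + k - 1) False"
          using invD(4)[OF C] a kt by simp
      qed
      also have "\<dots> = Ob b"
      proof -
        have e: "(t + 2 - k \<le> 1) = (\<not> k \<le> t)" "(t + 1 + k \<le> t + 2 - k) = False" "t + 1 + k - 1 = k + t"
          using kt k by auto
        show ?thesis unfolding Ob_def r(1) e using invD(2)[OF C] invD(3)[OF C] ln a kt k
          by (simp add: Suc_diff_le)
      qed
      finally show ?thesis by simp
    qed
    have OFv: "OF = Vr f d w (Suc t + 2 - k) (t + k) False" if k2: "2 \<le> k"
    proof -
      obtain l where l: "L = Some l" "inv w t (k-1) l" using L(2)[OF k2] by auto
      have "Vr f d w (Suc t + 2 - k) (t + k) False = g (Suc t + 2 - k \<le> 1) (t + k \<le> Suc t + 2 - k) False (w!(Suc t + 2 - k - 1)) (w!(t + k - 1))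
          (ve False c) (ve False l)"
      proof (rule Vr_g)
        assume "\<not> Suc t + 2 - k \<le> 1"
        then show "ve False c = Vr f d w (Suc t + 2 - k - 1) (t + k) False"
          using invD(4)[OF C] a by simp
      next
        show "ve False l = Vr f d w (Suc t + 2 - k) (t + k - 1) False"
          using invD(4)[OF l(2), of "Suc t + 2 - k" "t + k - 1" False] a k2 by (simp add: eval_nat_numeral)
      qed
      also have "\<dots> = OF"
      proof -
        have e: "(Suc t + 2 - k \<le> 1) = (\<not> k \<le> Suc t)" "(t + k \<le> Suc t + 2 - k) = False" "Suc t + 2 - k - 1 = Suc t + 1 - k"
          using a k2 by auto
        show ?thesis unfolding OF_def l(1) e using invD(1)[OF C] sn rn a k2 k
          by (simp add: Suc_diff_le add.commute)
      qed
      finally show ?thesis by simp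
    qed
    have "Vr f d w (Suc t + 2 - k) (Suc t + k) b = g (Suc t + 2 - k \<le> 1) (Suc t + k \<le> Suc t + 2 - k) b
          (w!(Suc t + 2 - k - 1)) (w!(Suc t + k - 1)) (Ob b) OF"
    proof (rule Vr_g)
      assume "\<not> Suc t + 2 - k \<le> 1"
      then show "Ob b = Vr f d w (Suc t + 2 - k - 1) (Suc t + k) b" using Obb by simp
    next
      assume "\<not> Suc t + k \<le> Suc t + 2 - k"
      then show "OF = Vr f d w (Suc t + 2 - k) (Suc t + k - 1) False" using OFv by simp
    qed
    also have "\<dots> = E b"
    proof -
      have e: "(Suc t + 2 - k \<le> 1) = (\<not> k \<le> Suc t)" "(Suc t + k \<le> Suc t + 2 - k) = (k = 1)"
         "Suc t + 2 - k - 1 = Suc t + 1 - k" "Suc t + k - 1 = k + t"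
        using a k by auto
      show ?thesis unfolding E_def e using first sn rn ln a k by (simp add: Suc_diff_le)
    qed
    finally show ?thesis by simp
  qed
  show ?thesis unfolding st inv_def
    using ln sn rn E by simp
qed

lemma ast_inv: "1 \<le> k \<Longrightarrow> k \<le> length w \<Longrightarrow> \<exists>s. ast w t (int k) = Some s \<and> inv w t k s"
proof (induction t arbitrary: k)
  case 0
  then show ?case using inv_base[of k w] by (auto simp: nat_diff_distrib)
next
  case (Suc t)
  obtain c where c: "ast w t (int k) = Some c" "inv w t k c" using Suc by blast
  let ?L = "ast w t (int k - 1)" and ?R = "ast w t (int k + 1)"
  have L1: "k = 1 \<Longrightarrow> ?L = None" by (simp add: ast_none)
  have L2: "2 \<le> k \<Longrightarrow> \<exists>l. ?L = Some l \<and> inv w t (k-1) l"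
    using Suc.IH[of "k-1"] Suc.prems by (auto simp: of_nat_diff)
  have R1: "k = length w \<Longrightarrow> ?R = None" by (simp add: ast_none)
  have R2: "k < length w \<Longrightarrow> \<exists>r. ?R = Some r \<and> inv w t (k+1) r"
    using Suc.IH[of "k+1"] Suc.prems by (auto simp: add.commute)
  have "inv w (Suc t) k (step ?L (Some c) ?R)"
    by (rule inv_step) (use Suc.prems c L1 L2 R1 R2 in auto)
  then show ?case using Suc.prems c by auto
qed

lemma ast_final:
  assumes "w \<noteq> []"
  shows "\<exists>s. ast w (length w - 1) 1 = Some s \<and> ve True s = Vr f d w (length w) (length w) True"
proof -
  have n: "1 \<le> length w" using assms by (simp add: Suc_le_eq)
  obtain s where s: "ast w (length w - 1) (int 1) = Some s" "inv w (length w - 1) 1 s"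
    using ast_inv[of 1 w "length w - 1"] n by auto
  have "ve True s = Vr f d w (length w) (length w) True"
    using invD(4)[OF s(2), of "length w" "length w" True] n by simp
  then show ?thesis using s by auto
qed

lemma step_SS: "\<forall>x1 xy b a c l dn. f x1 xy b a c l dn \<in> Vals \<Longrightarrow> step L C R \<in> SS Vals"
proof -
  assume fV: "\<forall>x1 xy b a c l dn. f x1 xy b a c l dn \<in> Vals"
  have gV: "g x1 xy b a c l dn \<in> Vals" for x1 xy b a c l dn using fV by (simp add: gfil_def)
  show ?thesis
  proof (cases C)
    case None then show ?thesis by (simp add: step_def SS_def)
  next
    case (Some c)
    show ?thesis unfolding step_def Some Let_def option.case
      by (rule CpS) (rule gV)+
  qed
qed

lemma ast_SS: "\<forall>x1 xy b a c l dn. f x1 xy b a c l dn \<in> Vals \<Longrightarrow> ast w t k = Some s \<Longrightarrow> s \<in> SS Vals"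
  by (cases t) (auto simp: LtS step_SS split: if_splits)

end

lemma finite_SS: "finite (UNIV :: 'a set) \<Longrightarrow> finite Vals \<Longrightarrow> finite (SS Vals :: ('a, 'v) cst set)"
  unfolding SS_def by (intro finite_UnI finite_imageI) (auto intro!: finite_cartesian_product)

lemma grid_RT:
  fixes L :: "('a::finite) list set" and f :: "bool \<Rightarrow> bool \<Rightarrow> bool \<Rightarrow> 'a \<Rightarrow> 'a \<Rightarrow> 'v \<Rightarrow> 'v \<Rightarrow> 'v"
  assumes fin: "finite Vals" and fV: "\<forall>x1 xy b a c l dn. f x1 xy b a c l dn \<in> Vals"
    and acc: "\<forall>w. w \<noteq> [] \<longrightarrow> (w \<in> L \<longleftrightarrow> Vr f d w (length w) (length w) True \<in> A)"
  shows "RealTime_CA L"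
proof -
  interpret grid f d .
  have fa: "finite (UNIV :: 'a set)" by simp
  have finS: "finite (SS Vals :: ('a, 'v) cst set)" using finite_SS[OF fa fin] .
  obtain N and dec :: "nat \<Rightarrow> ('a, 'v) cst" where dec: "SS Vals = dec ` {i. i < N}" "inj_on dec {i. i < N}"
    using finite_imp_nat_seg_image_inj_on[OF finS] by blast
  define enc where "enc = the_inv_into {i. i < N} dec"
  have enc1: "s \<in> SS Vals \<Longrightarrow> enc s < N \<and> dec (enc s) = s" for s
    unfolding enc_def using dec the_inv_into_f_f[OF dec(2)] the_inv_into_into[OF dec(2)]
    by (metis f_the_inv_into_f mem_Collect_eq order_refl)
  have enc_inj: "inj_on enc (SS Vals)" by (metis enc1 inj_onI)
  define \<delta> where "\<delta> = (\<lambda>a b c. enc (step (map_option dec a) (map_option dec b) (map_option dec c)))"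
  define inp where "inp = (\<lambda>s::'a. enc (Lt s))"
  define Q where "Q = {i. i < N}"
  define Qacc where "Qacc = {i. i < N \<and> ve True (dec i) \<in> A}"
  have isca: "is_CA Q inp Qacc \<delta>"
    unfolding is_CA_def
  proof (intro conjI allI impI)
    show "finite Q" by (simp add: Q_def)
    show "inj inp" unfolding inp_def
      by (rule injI) (metis LtS cst.inject(1) enc1)
    show "range inp \<subseteq> Q" using enc1[OF LtS] by (auto simp: inp_def Q_def)
    show "Qacc \<subseteq> Q" by (auto simp: Qacc_def Q_def)
    fix a b c show "\<delta> a b c \<in> Q" using enc1 step_SS[OF fV] by (simp add: \<delta>_def Q_def)
  qed
  have run: "ca_state \<delta> inp w t c = map_option enc (ast w t c)" for w t c
  proof (induction t arbitrary: c)
    case 0 then show ?case by (simp add: inp_def)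
  next
    case (Suc t)
    have md: "map_option dec (map_option enc (ast w t c')) = ast w t c'" for c'
      using ast_SS[OF fV, of w t c'] enc1 by (cases "ast w t c'") auto
    show ?case using Suc md by (simp add: \<delta>_def)
  qed
  have "\<forall>w. w \<noteq> [] \<longrightarrow> (w \<in> L \<longleftrightarrow> the (ca_state \<delta> inp w (length w - 1) 1) \<in> Qacc)"
  proof (intro allI impI)
    fix w :: "'a list" assume ne: "w \<noteq> []"
    obtain s where s: "ast w (length w - 1) 1 = Some s" "ve True s = Vr f d w (length w) (length w) True"
      using ast_final[OF ne] by blast
    have sS: "s \<in> SS Vals" using ast_SS[OF fV s(1)] .
    have "the (ca_state \<delta> inp w (length w - 1) 1) = enc s" using run s by simp
    then show "w \<in> L \<longleftrightarrow> the (ca_state \<delta> inp w (length w - 1) 1) \<in> Qacc"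
      using acc ne s enc1[OF sS] by (simp add: Qacc_def)
  qed
  then show ?thesis unfolding RealTime_CA_def using isca by blast
qed



fun hh :: "(nat \<Rightarrow> 'a) \<Rightarrow> (nat \<Rightarrow> bool) \<Rightarrow> (nat \<Rightarrow> nat \<Rightarrow> nat \<Rightarrow> bool) \<Rightarrow> nat \<Rightarrow> nat \<Rightarrow> 'a hyp \<Rightarrow> bool" where
  "hh lt mx R x y (HQ s v a) = (lt (predk a (var_val v x y)) = s)"
| "hh lt mx R x y (HMin p v a) = ((predk a (var_val v x y) = 1) = p)"
| "hh lt mx R x y (HMax p v a) = (mx (predk a (var_val v x y)) = p)"
| "hh lt mx R x y (HRxy S a b) = R S (predk a x) (predk b y)"
| "hh lt mx R x y (HRyx S b a) = R S (predk b y) (predk a x)"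

lemma hyp_holds_hh: "hyp_holds w R x y h = hh (\<lambda>p. w ! (p - 1)) (\<lambda>p. p = length w) R x y h"
  by (cases h) auto

lemma predk_is1: "predk a x = 1 \<longleftrightarrow> x \<le> a + 1" by (auto simp add: predk_def)

lemma hh_mono: "hh lt mx R x y h \<Longrightarrow> (\<And>S p q. R S p q \<Longrightarrow> R' S p q) \<Longrightarrow> hh lt mx R' x y h"
  by (cases h) auto

lemma predk_le: "predk a x \<le> max 1 x" and predk_ge: "1 \<le> predk a x"
  by (auto simp: predk_def)

lemma hh_local:
  assumes "\<And>S p q. 1 \<le> p \<Longrightarrow> p \<le> M \<Longrightarrow> 1 \<le> q \<Longrightarrow> q \<le> M \<Longrightarrow> R S p q = R' S p q"
    and "\<And>p. 1 \<le> p \<Longrightarrow> p \<le> M \<Longrightarrow> mx p = mx' p"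
    and "1 \<le> x" "x \<le> M" "1 \<le> y" "y \<le> M"
  shows "hh lt mx R x y h = hh lt mx' R' x y h"
proof -
  have px: "1 \<le> predk a x" "predk a x \<le> M" and py: "1 \<le> predk a y" "predk a y \<le> M" for a
    using assms(3-6) by (auto simp: predk_def)
  have pv: "1 \<le> predk a (var_val v x y)" "predk a (var_val v x y) \<le> M" for a v
    using px py by (cases v; simp add: var_val_def)+
  show ?thesis using assms(1,2) px py pv by (cases h) auto
qed

locale horn =
  fixes \<Phi> :: "'a horn_formula"
begin

definition PS :: "nat set" where
  "PS = {S. \<exists>cl \<in> set \<Phi>. snd cl = Some S}"

lemma finite_PS: "finite PS"
proof -
  have "PS \<subseteq> (\<lambda>cl. the (snd cl)) ` set \<Phi>" unfolding PS_def by force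
  then show ?thesis by (rule finite_subset) simp
qed

definition isModel :: "(nat \<Rightarrow> 'a) \<Rightarrow> nat \<Rightarrow> (nat \<Rightarrow> bool) \<Rightarrow> (nat \<Rightarrow> nat \<Rightarrow> nat \<Rightarrow> bool) \<Rightarrow> bool" where
  "isModel lt m mx R \<longleftrightarrow> (\<forall>x y cl S. 1 \<le> x \<longrightarrow> x \<le> m \<longrightarrow> 1 \<le> y \<longrightarrow> y \<le> m \<longrightarrow> cl \<in> set \<Phi> \<longrightarrow> snd cl = Some S \<longrightarrow>
      (\<forall>h\<in>set (fst cl). hh lt mx R x y h) \<longrightarrow> R S x y)"

definition LM :: "(nat \<Rightarrow> 'a) \<Rightarrow> nat \<Rightarrow> (nat \<Rightarrow> bool) \<Rightarrow> nat \<Rightarrow> nat \<Rightarrow> nat \<Rightarrow> bool" where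
  "LM lt m mx S p q \<longleftrightarrow> 1 \<le> p \<and> p \<le> m \<and> 1 \<le> q \<and> q \<le> m \<and> S \<in> PS \<and> (\<forall>R. isModel lt m mx R \<longrightarrow> R S p q)"

definition fires :: "(nat \<Rightarrow> 'a) \<Rightarrow> (nat \<Rightarrow> bool) \<Rightarrow> (nat \<Rightarrow> nat \<Rightarrow> nat \<Rightarrow> bool) \<Rightarrow> nat \<Rightarrow> nat \<Rightarrow> bool" where
  "fires lt mx R x y \<longleftrightarrow> (\<exists>cl\<in>set \<Phi>. snd cl = None \<and> (\<forall>h\<in>set (fst cl). hh lt mx R x y h))"

lemma isModelD: "isModel lt m mx R \<Longrightarrow> 1 \<le> x \<Longrightarrow> x \<le> m \<Longrightarrow> 1 \<le> y \<Longrightarrow> y \<le> m \<Longrightarrow> cl \<in> set \<Phi> \<Longrightarrow> snd cl = Some S \<Longrightarrow>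
      (\<forall>h\<in>set (fst cl). hh lt mx R x y h) \<Longrightarrow> R S x y"
  unfolding isModel_def by blast

lemma LM_least: "isModel lt m mx R \<Longrightarrow> LM lt m mx S p q \<Longrightarrow> R S p q"
  unfolding LM_def by blast

lemma LM_model: "isModel lt m mx (LM lt m mx)"
  unfolding isModel_def
proof (intro allI impI)
  fix x y cl S
  assume a: "1 \<le> x" "x \<le> m" "1 \<le> y" "y \<le> m" "cl \<in> set \<Phi>" "snd cl = Some S"
    and h: "\<forall>h\<in>set (fst cl). hh lt mx (LM lt m mx) x y h"
  have "R S x y" if R: "isModel lt m mx R" for R
  proof (rule isModelD[OF R a])
    show "\<forall>h\<in>set (fst cl). hh lt mx R x y h"
      using h hh_mono LM_least[OF R] by blast
  qed
  moreover have "S \<in> PS" using a unfolding PS_def by blast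
  ultimately show "LM lt m mx S x y" using a unfolding LM_def by blast
qed

lemma LM_PS: "LM lt m mx S p q \<Longrightarrow> S \<in> PS" and LM_range: "LM lt m mx S p q \<Longrightarrow> 1 \<le> p \<and> p \<le> m \<and> 1 \<le> q \<and> q \<le> m"
  unfolding LM_def by auto

lemma models_iff:
  assumes ne: "w \<noteq> []"
  shows "models w \<Phi> \<longleftrightarrow> \<not> (\<exists>x y. 1 \<le> x \<and> x \<le> length w \<and> 1 \<le> y \<and> y \<le> length w \<and>
      fires (\<lambda>p. w ! (p - 1)) (\<lambda>p. p = length w) (LM (\<lambda>p. w ! (p - 1)) (length w) (\<lambda>p. p = length w)) x y)"
  (is "_ \<longleftrightarrow> \<not> (\<exists>x y. ?F x y)")
proof
  assume "models w \<Phi>"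
  then obtain R where R: "\<forall>x\<in>{1..length w}. \<forall>y\<in>{1..length w}. \<forall>cl\<in>set \<Phi>. clause_holds w R x y cl"
    unfolding models_def by blast
  have mR: "isModel (\<lambda>p. w ! (p - 1)) (length w) (\<lambda>p. p = length w) R"
    unfolding isModel_def
  proof (intro allI impI)
    fix x y cl S assume a: "1 \<le> x" "x \<le> length w" "1 \<le> y" "y \<le> length w" "cl \<in> set \<Phi>" "snd cl = Some S"
      "\<forall>h\<in>set (fst cl). hh (\<lambda>p. w ! (p - 1)) (\<lambda>p. p = length w) R x y h"
    then have "clause_holds w R x y cl" using R by auto
    then show "R S x y" using a by (simp add: clause_holds_def hyp_holds_hh)
  qed
  show "\<not> (\<exists>x y. ?F x y)"
  proof
    assume "\<exists>x y. ?F x y"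
    then obtain x y cl where a: "1 \<le> x" "x \<le> length w" "1 \<le> y" "y \<le> length w" "cl \<in> set \<Phi>" "snd cl = None"
      "\<forall>h\<in>set (fst cl). hh (\<lambda>p. w ! (p - 1)) (\<lambda>p. p = length w) (LM (\<lambda>p. w ! (p - 1)) (length w) (\<lambda>p. p = length w)) x y h"
      unfolding fires_def by blast
    then have "\<forall>h\<in>set (fst cl). hh (\<lambda>p. w ! (p - 1)) (\<lambda>p. p = length w) R x y h"
      using hh_mono LM_least[OF mR] by blast
    moreover have "clause_holds w R x y cl" using R a by auto
    ultimately show False using a by (simp add: clause_holds_def hyp_holds_hh)
  qed
next
  assume nf: "\<not> (\<exists>x y. ?F x y)"
  let ?R = "LM (\<lambda>p. w ! (p - 1)) (length w) (\<lambda>p. p = length w)"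
  have "\<forall>x\<in>{1..length w}. \<forall>y\<in>{1..length w}. \<forall>cl\<in>set \<Phi>. clause_holds w ?R x y cl"
  proof (intro ballI)
    fix x y cl assume a: "x \<in> {1..length w}" "y \<in> {1..length w}" "cl \<in> set \<Phi>"
    show "clause_holds w ?R x y cl"
    proof (cases "snd cl")
      case None
      have "\<not> ?F x y" using nf by blast
      then have "\<not> (\<forall>h\<in>set (fst cl). hh (\<lambda>p. w ! (p - 1)) (\<lambda>p. p = length w) ?R x y h)"
        using a None unfolding fires_def by auto
      then show ?thesis using None unfolding clause_holds_def by (auto simp: hyp_holds_hh)
    next
      case (Some S)
      then show ?thesis using isModelD[OF LM_model, of x "length w" y cl S] a
        unfolding clause_holds_def by (auto simp: hyp_holds_hh)
    qed
  qed
  then show "models w \<Phi>" unfolding models_def by blast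
qed

lemma LM_prefix:
  assumes yy: "y' \<le> y" and mxe: "\<And>p. 1 \<le> p \<Longrightarrow> p \<le> y' \<Longrightarrow> mx p = mx' p"
    and pq: "1 \<le> p" "p \<le> y'" "1 \<le> q" "q \<le> y'"
  shows "LM lt y mx S p q = LM lt y' mx' S p q"
proof -
  let ?A = "LM lt y mx" and ?B = "LM lt y' mx'"
  define Ar where "Ar = (\<lambda>S p q. p \<le> y' \<and> q \<le> y' \<and> ?A S p q)"
  have AB_eq: "\<And>S p q. 1 \<le> p \<Longrightarrow> p \<le> y' \<Longrightarrow> 1 \<le> q \<Longrightarrow> q \<le> y' \<Longrightarrow> Ar S p q = ?A S p q"
    unfolding Ar_def by auto
  have mAr: "isModel lt y' mx' Ar"
    unfolding isModel_def
  proof (intro allI impI)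
    fix x y0 cl S assume a: "1 \<le> x" "x \<le> y'" "1 \<le> y0" "y0 \<le> y'" "cl \<in> set \<Phi>" "snd cl = Some S"
      and h: "\<forall>h\<in>set (fst cl). hh lt mx' Ar x y0 h"
    have "\<forall>h\<in>set (fst cl). hh lt mx ?A x y0 h"
      using h hh_local[of y' Ar ?A mx' mx x y0 lt] AB_eq mxe a by auto
    moreover have "x \<le> y" "y0 \<le> y" using a yy by auto
    ultimately have "?A S x y0" using isModelD[OF LM_model] a by blast
    then show "Ar S x y0" using a unfolding Ar_def by auto
  qed
  have BA: "?B S' p' q' \<Longrightarrow> ?A S' p' q'" for S' p' q'
    using LM_least[OF mAr] unfolding Ar_def by blast
  define M' where "M' = (\<lambda>S p q. if p \<le> y' \<and> q \<le> y' then ?B S p q else ?A S p q)"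
  have M'A: "M' S' p' q' \<Longrightarrow> ?A S' p' q'" for S' p' q' unfolding M'_def using BA by (auto split: if_splits)
  have mM': "isModel lt y mx M'"
    unfolding isModel_def
  proof (intro allI impI)
    fix x y0 cl S assume a: "1 \<le> x" "x \<le> y" "1 \<le> y0" "y0 \<le> y" "cl \<in> set \<Phi>" "snd cl = Some S"
      and h: "\<forall>h\<in>set (fst cl). hh lt mx M' x y0 h"
    show "M' S x y0"
    proof (cases "x \<le> y' \<and> y0 \<le> y'")
      case True
      have "\<forall>h\<in>set (fst cl). hh lt mx' ?B x y0 h"
        using h hh_local[of y' M' ?B mx mx' x y0 lt] mxe a True unfolding M'_def by auto
      then have "?B S x y0" using isModelD[OF LM_model] a True by blast
      then show ?thesis using True unfolding M'_def by auto
    next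
      case False
      have "\<forall>h\<in>set (fst cl). hh lt mx ?A x y0 h" using h hh_mono M'A by blast
      then have "?A S x y0" using isModelD[OF LM_model] a by blast
      then show ?thesis using False unfolding M'_def by auto
    qed
  qed
  show ?thesis
  proof
    assume "?A S p q"
    then have "M' S p q" using LM_least[OF mM'] by blast
    then show "?B S p q" using pq unfolding M'_def by auto
  qed (rule BA)
qed

lemma fires_prefix:
  assumes yy: "y' \<le> y" and mxe: "\<And>p. 1 \<le> p \<Longrightarrow> p \<le> y' \<Longrightarrow> mx p = mx' p"
    and pq: "1 \<le> p" "p \<le> y'" "1 \<le> q" "q \<le> y'"
  shows "fires lt mx (LM lt y mx) p q = fires lt mx' (LM lt y' mx') p q"
proof -
  have "hh lt mx (LM lt y mx) p q h = hh lt mx' (LM lt y' mx') p q h" for h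
    by (rule hh_local[of y']) (use LM_prefix[OF yy mxe] mxe pq in auto)
  then show ?thesis unfolding fires_def by simp
qed

end

fun hoff :: "'a hyp \<Rightarrow> nat" where
  "hoff (HQ s v a) = a" | "hoff (HMin p v a) = a" | "hoff (HMax p v a) = a"
| "hoff (HRxy S a b) = max a b" | "hoff (HRyx S b a) = max a b"

datatype 'a gv = GV (gfacts: "(nat \<times> nat \<times> nat \<times> bool) set") (glx: "'a list") (gly: "'a list") (gcx: nat) (gcy: nat) (gbad: bool)

fun heval :: "bool \<Rightarrow> bool \<Rightarrow> 'a list \<Rightarrow> 'a list \<Rightarrow> nat \<Rightarrow> nat \<Rightarrow> (nat \<Rightarrow> nat \<Rightarrow> nat \<Rightarrow> bool \<Rightarrow> bool) \<Rightarrow> bool \<Rightarrow> 'a hyp \<Rightarrow> bool" where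
  "heval b xy lx ly cx cy lk ob (HQ s v a) = ((if (v = VX) \<noteq> ob then lx else ly) ! a = s)"
| "heval b xy lx ly cx cy lk ob (HMin p v a) = (((if (v = VX) \<noteq> ob then cx else cy) \<le> a + 1) = p)"
| "heval b xy lx ly cx cy lk ob (HMax p v a) = ((b \<and> (if (v = VX) \<noteq> ob then xy \<and> (a = 0 \<or> cy = 1) else (a = 0 \<or> cy = 1))) = p)"
| "heval b xy lx ly cx cy lk ob (HRxy S a b') = (if ob then lk b' a S True else lk a b' S False)"
| "heval b xy lx ly cx cy lk ob (HRyx S b' a) = (if ob then lk b' a S False else lk a b' S True)"

lemma heval_mono: "heval b xy lx ly cx cy lk ob h \<Longrightarrow> (\<And>i j S ob. lk i j S ob \<Longrightarrow> lk' i j S ob) \<Longrightarrow> heval b xy lx ly cx cy lk' ob h"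
  by (cases h) (auto split: if_splits)

context horn
begin

definition K :: nat where
  "K = Max (insert 0 (hoff ` (\<Union>cl \<in> set \<Phi>. set (fst cl))))"

lemma hoff_le: "cl \<in> set \<Phi> \<Longrightarrow> h \<in> set (fst cl) \<Longrightarrow> hoff h \<le> K"
  unfolding K_def by (rule Max_ge) auto

definition Vs :: "(nat \<Rightarrow> 'a) \<Rightarrow> nat \<Rightarrow> bool \<Rightarrow> nat \<Rightarrow> 'a gv" where
  "Vs lt y b x = GV
     {(i, j, S, ob). i \<le> K \<and> j \<le> K \<and> S \<in> PS \<and> (if ob then LM lt y (\<lambda>p. b \<and> p = y) S (predk j y) (predk i x)
                                                   else LM lt y (\<lambda>p. b \<and> p = y) S (predk i x) (predk j y))}
     (map (\<lambda>i. lt (predk i x)) [0..<Suc K]) (map (\<lambda>j. lt (predk j y)) [0..<Suc K]) (min x (K+2)) (min y (K+2))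
     (\<exists>p q. 1 \<le> p \<and> p \<le> q \<and> p \<le> x \<and> q \<le> y \<and>
        (fires lt (\<lambda>p. b \<and> p = y) (LM lt y (\<lambda>p. b \<and> p = y)) p q \<or> fires lt (\<lambda>p. b \<and> p = y) (LM lt y (\<lambda>p. b \<and> p = y)) q p))"

definition Fcx :: "bool \<Rightarrow> 'a gv \<Rightarrow> nat" where
  "Fcx x1 left = (if x1 then 1 else min (gcx left + 1) (K+2))"
definition Fcy :: "bool \<Rightarrow> bool \<Rightarrow> 'a gv \<Rightarrow> 'a gv \<Rightarrow> nat" where
  "Fcy x1 xy left down = (if xy then Fcx x1 left else min (gcy down + 1) (K+2))"
definition Flx :: "bool \<Rightarrow> 'a \<Rightarrow> 'a gv \<Rightarrow> 'a list" where
  "Flx x1 a left = (if x1 then replicate (Suc K) a else a # take K (glx left @ replicate K a))"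
definition Fly :: "bool \<Rightarrow> bool \<Rightarrow> 'a \<Rightarrow> 'a \<Rightarrow> 'a gv \<Rightarrow> 'a gv \<Rightarrow> 'a list" where
  "Fly x1 xy a c left down = (if xy then Flx x1 a left else c # take K (gly down @ replicate K c))"
definition isP :: "bool \<Rightarrow> nat \<Rightarrow> nat \<Rightarrow> nat \<Rightarrow> bool" where
  "isP x1 cy i j = ((i = 0 \<or> x1) \<and> (j = 0 \<or> cy = 1))"
definition nonP :: "bool \<Rightarrow> bool \<Rightarrow> 'a gv \<Rightarrow> 'a gv \<Rightarrow> nat \<Rightarrow> nat \<Rightarrow> nat \<Rightarrow> bool \<Rightarrow> bool" where
  "nonP x1 xy left down i j S ob = (if 1 \<le> i \<and> \<not> x1 then (i - 1, j, S, ob) \<in> gfacts left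
      else if \<not> xy then (i, j - 1, S, ob) \<in> gfacts down else (j - 1, 0, S, \<not> ob) \<in> gfacts left)"
definition look :: "bool \<Rightarrow> nat \<Rightarrow> (nat \<Rightarrow> nat \<Rightarrow> nat \<Rightarrow> bool \<Rightarrow> bool) \<Rightarrow> (nat \<times> bool) set \<Rightarrow> nat \<Rightarrow> nat \<Rightarrow> nat \<Rightarrow> bool \<Rightarrow> bool" where
  "look x1 cy nP X i j S ob = (if isP x1 cy i j then (S, ob) \<in> X else nP i j S ob)"
definition Tf :: "bool \<Rightarrow> bool \<Rightarrow> 'a list \<Rightarrow> 'a list \<Rightarrow> nat \<Rightarrow> nat \<Rightarrow> ((nat \<times> bool) set \<Rightarrow> nat \<Rightarrow> nat \<Rightarrow> nat \<Rightarrow> bool \<Rightarrow> bool) \<Rightarrow> (nat \<times> bool) set \<Rightarrow> (nat \<times> bool) set" where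
  "Tf b xy lx ly cx cy lk X = {(S, ob). \<exists>ob'. (ob' = ob \<or> xy) \<and> (\<exists>cl\<in>set \<Phi>. snd cl = Some S \<and> (\<forall>h\<in>set (fst cl). heval b xy lx ly cx cy (lk X) ob' h))}"

definition F :: "bool \<Rightarrow> bool \<Rightarrow> bool \<Rightarrow> 'a \<Rightarrow> 'a \<Rightarrow> 'a gv \<Rightarrow> 'a gv \<Rightarrow> 'a gv" where
  "F x1 xy b a c left down =
    (let cx = Fcx x1 left; cy = Fcy x1 xy left down; lx = Flx x1 a left; ly = Fly x1 xy a c left down;
         lk = look x1 cy (nonP x1 xy left down);
         P = lfp (Tf b xy lx ly cx cy lk);
         fw = (\<lambda>ob. \<exists>cl\<in>set \<Phi>. snd cl = None \<and> (\<forall>h\<in>set (fst cl). heval b xy lx ly cx cy (lk P) ob h))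
     in GV {(i, j, S, ob). i \<le> K \<and> j \<le> K \<and> S \<in> PS \<and> lk P i j S ob} lx ly cx cy
           (fw False \<or> fw True \<or> (\<not> x1 \<and> gbad left) \<or> (\<not> xy \<and> gbad down)))"

lemma Tf_mono: "mono (Tf b xy lx ly cx cy (look x1 cy nP))"
proof (rule monoI, rule subsetI)
  fix X Y :: "(nat \<times> bool) set" and z assume XY: "X \<subseteq> Y"
  have lk: "look x1 cy nP X i j S ob \<Longrightarrow> look x1 cy nP Y i j S ob" for i j S ob
    using XY unfolding look_def by (auto split: if_splits)
  assume "z \<in> Tf b xy lx ly cx cy (look x1 cy nP) X"
  then obtain S ob ob' cl where z: "z = (S, ob)" "ob' = ob \<or> xy" "cl \<in> set \<Phi>" "snd cl = Some S"
    "\<forall>h\<in>set (fst cl). heval b xy lx ly cx cy (look x1 cy nP X) ob' h"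
    unfolding Tf_def by blast
  have "\<forall>h\<in>set (fst cl). heval b xy lx ly cx cy (look x1 cy nP Y) ob' h"
  proof
    fix h assume "h \<in> set (fst cl)"
    then have "heval b xy lx ly cx cy (look x1 cy nP X) ob' h" using z by blast
    then show "heval b xy lx ly cx cy (look x1 cy nP Y) ob' h" by (rule heval_mono) (rule lk)
  qed
  then show "z \<in> Tf b xy lx ly cx cy (look x1 cy nP) Y"
    unfolding Tf_def using z by blast
qed

end

locale horn_pt = horn \<Phi> for \<Phi> :: "'a horn_formula" +
  fixes lt :: "nat \<Rightarrow> 'a" and y :: nat and b :: bool and x :: nat and left down :: "'a gv"
  assumes x1: "1 \<le> x" and xy: "x \<le> y"
    and left: "2 \<le> x \<Longrightarrow> left = Vs lt y b (x - 1)"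
    and down: "x < y \<Longrightarrow> down = Vs lt (y - 1) False x"
begin

abbreviation "mx \<equiv> (\<lambda>p. b \<and> p = y)"
abbreviation "M \<equiv> LM lt y mx"
abbreviation "X1 \<equiv> (x \<le> 1)"
abbreviation "XY \<equiv> (y \<le> x)"
abbreviation "cx \<equiv> Fcx X1 left"
abbreviation "cy \<equiv> Fcy X1 XY left down"
abbreviation "lx \<equiv> Flx X1 (lt x) left"
abbreviation "ly \<equiv> Fly X1 XY (lt x) (lt y) left down"
abbreviation "nP \<equiv> nonP X1 XY left down"
abbreviation "lk \<equiv> look X1 cy nP"

lemma cx_eq: "cx = min x (K+2)"
  using x1 left by (cases "x \<le> 1") (auto simp: Fcx_def Vs_def)

lemma cy_eq: "cy = min y (K+2)"
  using x1 xy down cx_eq by (cases "y \<le> x") (auto simp: Fcy_def Vs_def)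

lemma lx_nth: "i \<le> K \<Longrightarrow> lx ! i = lt (predk i x)"
proof (cases "x \<le> 1")
  case True
  assume "i \<le> K"
  then show ?thesis using True x1 by (simp add: Flx_def predk_def nth_Cons' )
next
  case False
  assume i: "i \<le> K"
  show ?thesis
  proof (cases i)
    case 0 then show ?thesis using False by (simp add: Flx_def predk_def)
  next
    case (Suc i')
    have "glx left ! i' = lt (predk i' (x - 1))" using left False i Suc by (simp add: Vs_def nth_append)
    moreover have "predk i' (x - 1) = predk i x" using Suc False by (simp add: predk_def)
    ultimately show ?thesis using False i Suc by (simp add: Flx_def nth_append left Vs_def)
  qed
qed

lemma ly_nth: "j \<le> K \<Longrightarrow> ly ! j = lt (predk j y)"
proof (cases "y \<le> x")
  case True
  assume "j \<le> K"
  then show ?thesis using True xy lx_nth by (simp add: Fly_def)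
next
  case False
  assume j: "j \<le> K"
  show ?thesis
  proof (cases j)
    case 0 then show ?thesis using False x1 by (simp add: Fly_def predk_def)
  next
    case (Suc j')
    have "gly down ! j' = lt (predk j' (y - 1))" using down False j Suc by (simp add: Vs_def nth_append)
    moreover have "predk j' (y - 1) = predk j y" using Suc False by (simp add: predk_def)
    ultimately show ?thesis using False j Suc by (simp add: Fly_def nth_append down Vs_def)
  qed
qed

lemma predk_self: "1 \<le> z \<Longrightarrow> predk i z = z \<longleftrightarrow> (i = 0 \<or> z = 1)"
  by (auto simp: predk_def)

lemma predk_Suc: "2 \<le> z \<Longrightarrow> predk (i - 1) (z - 1) = predk i z \<or> i = 0"
  by (cases i) (auto simp: predk_def)

lemma predk_shift: "1 \<le> i \<Longrightarrow> 2 \<le> z \<Longrightarrow> predk (i - 1) (z - 1) = predk i z"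
  by (cases i) (auto simp: predk_def)

lemma isP_eq: "isP X1 cy i j \<longleftrightarrow> predk i x = x \<and> predk j y = y"
  using x1 xy cy_eq predk_self[of x i] predk_self[of y j] unfolding isP_def by auto

lemma nonP_eq:
  assumes ij: "i \<le> K" "j \<le> K" and np: "\<not> isP X1 cy i j"
  shows "nP i j S ob \<longleftrightarrow> S \<in> PS \<and> (if ob then M S (predk j y) (predk i x) else M S (predk i x) (predk j y))"
proof (cases "1 \<le> i \<and> \<not> x \<le> 1")
  case True
  then have l: "left = Vs lt y b (x - 1)" using left by auto
  have "predk (i - 1) (x - 1) = predk i x" using True by (intro predk_shift) auto
  then show ?thesis using True ij unfolding nonP_def l Vs_def by auto
next
  case False
  then have pix: "predk i x = x" using x1 by (auto simp: predk_def)
  have jy: "j \<noteq> 0" "y \<noteq> 1" using np pix unfolding isP_eq using x1 xy predk_self[of y j] by auto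
  then have y2: "2 \<le> y" using x1 xy by auto
  have qy: "predk j y \<le> y - 1" "1 \<le> predk j y" using jy y2 by (auto simp: predk_def)
  have pj: "predk (j - 1) (y - 1) = predk j y" using jy y2 by (intro predk_shift) auto
  show ?thesis
  proof (cases "y \<le> x")
    case False2: False
    then have dn: "down = Vs lt (y - 1) False x" using down by auto
    have e: "M S p q = LM lt (y - 1) (\<lambda>p. False \<and> p = y - 1) S p q" if "1 \<le> p" "p \<le> y - 1" "1 \<le> q" "q \<le> y - 1" for p q
      by (rule LM_prefix) (use that in auto)
    have xl: "x \<le> y - 1" "1 \<le> x" using False2 x1 by auto
    have "j - 1 \<le> K" using ij by auto
    then show ?thesis unfolding nonP_def using False False2 ij pj pix e[OF xl(2) xl(1) qy(2) qy(1)] e[OF qy(2) qy(1) xl(2) xl(1)]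
      by (auto simp: dn Vs_def)
  next
    case True2: True
    then have xe: "x = y" using xy by auto
    then have l: "left = Vs lt y b (x - 1)" using left y2 by auto
    have pj2: "predk (j - 1) (x - 1) = predk j y" using pj xe by simp
    have "j - 1 \<le> K" using ij by auto
    moreover have "i = 0" using False xe y2 by auto
    moreover have "predk 0 y = y" using y2 by (simp add: predk_def)
    ultimately show ?thesis unfolding nonP_def using False True2 ij pj2 xe y2 x1
      by (auto simp: l Vs_def)
  qed
qed

definition Rx :: "(nat \<times> bool) set \<Rightarrow> nat \<Rightarrow> nat \<Rightarrow> nat \<Rightarrow> bool" where
  "Rx X S p q = (if (p, q) = (x, y) then (S, False) \<in> X else if (p, q) = (y, x) then (S, True) \<in> X else M S p q)"

definition symX :: "(nat \<times> bool) set \<Rightarrow> bool" where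
  "symX X \<longleftrightarrow> (y \<le> x \<longrightarrow> (\<forall>S. (S, True) \<in> X \<longleftrightarrow> (S, False) \<in> X))"

lemma predk_le_self: "predk a z \<le> max 1 z" by (auto simp: predk_def)

lemma lk_eq:
  assumes ij: "i \<le> K" "j \<le> K" and sX: "symX X"
  shows "lk X i j S ob = (if ob then Rx X S (predk j y) (predk i x) else Rx X S (predk i x) (predk j y))"
proof (cases "isP X1 cy i j")
  case True
  then have p: "predk i x = x" "predk j y = y" using isP_eq by auto
  have l: "lk X i j S ob = ((S, ob) \<in> X)" unfolding look_def using True by (simp only: if_True)
  have r1: "Rx X S x y = ((S, False) \<in> X)" unfolding Rx_def by simp
  have r2: "Rx X S y x = ((S, True) \<in> X)"
  proof (cases "x = y")
    case True
    then show ?thesis using sX unfolding Rx_def symX_def by simp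
  next
    case False
    then show ?thesis unfolding Rx_def by simp
  qed
  show ?thesis unfolding l p r1 r2 by (cases ob) simp_all
next
  case False
  have px: "predk i x \<le> x" "predk j y \<le> y" using predk_le_self[of i x] predk_le_self[of j y] x1 xy by auto
  have n1: "(predk i x, predk j y) \<noteq> (x, y)" "(predk j y, predk i x) \<noteq> (y, x)" using False isP_eq by auto
  have n2: "(predk i x, predk j y) \<noteq> (y, x)" "(predk j y, predk i x) \<noteq> (x, y)"
    using False isP_eq px xy by auto
  have r1: "Rx X S (predk i x) (predk j y) = M S (predk i x) (predk j y)"
    using n1(1) n2(1) unfolding Rx_def by (simp only: if_False)
  have r2: "Rx X S (predk j y) (predk i x) = M S (predk j y) (predk i x)"
    using n1(2) n2(2) unfolding Rx_def by (simp only: if_False)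
  have l: "lk X i j S ob = nP i j S ob" unfolding look_def using False by (simp only: if_False)
  show ?thesis unfolding l nonP_eq[OF ij False] r1 r2 using LM_PS by (cases ob) auto
qed

definition pt :: "bool \<Rightarrow> nat \<times> nat" where
  "pt ob = (if ob then (y, x) else (x, y))"

lemma predk_x_eq_y: "predk a x = y \<longleftrightarrow> y \<le> x \<and> (a = 0 \<or> y = 1)"
  using x1 xy by (auto simp: predk_def)

lemma heval_eq:
  assumes hK: "hoff h \<le> K" and sX: "symX X"
  shows "heval b XY lx ly cx cy (lk X) ob h = hh lt mx (Rx X) (fst (pt ob)) (snd (pt ob)) h"
proof (cases h)
  case (HQ s v a)
  then have a: "a \<le> K" using hK by simp
  show ?thesis using HQ lx_nth[OF a] ly_nth[OF a] by (cases v; cases ob) (auto simp: pt_def var_val_def)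
next
  case (HMin p v a)
  then have a: "a \<le> K" using hK by simp
  have ex: "(min x (K+2) \<le> a + 1) = (predk a x = 1)" "(min y (K+2) \<le> a + 1) = (predk a y = 1)"
    using a unfolding predk_is1 by auto
  show ?thesis using HMin ex cx_eq cy_eq by (cases v; cases ob) (auto simp: pt_def var_val_def)
next
  case (HMax p v a)
  have ey: "predk a y = y \<longleftrightarrow> (a = 0 \<or> y = 1)" using predk_self[of y a] x1 xy by auto
  have c1: "(min y (K+2) = 1) = (y = 1)" by auto
  show ?thesis using HMax predk_x_eq_y ey cy_eq c1 by (cases v; cases ob) (auto simp: pt_def var_val_def)
next
  case (HRxy S a b')
  then have a: "a \<le> K" "b' \<le> K" using hK by auto
  have e1: "lk X a b' S False = Rx X S (predk a x) (predk b' y)" using lk_eq[OF a(1) a(2) sX, of S] by simp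
  have e2: "lk X b' a S True = Rx X S (predk a y) (predk b' x)" using lk_eq[OF a(2) a(1) sX, of S] by simp
  show ?thesis using e1 e2 unfolding HRxy by (cases ob) (simp_all add: pt_def)
next
  case (HRyx S b' a)
  then have a: "a \<le> K" "b' \<le> K" using hK by auto
  have e1: "lk X a b' S True = Rx X S (predk b' y) (predk a x)" using lk_eq[OF a(1) a(2) sX, of S] by simp
  have e2: "lk X b' a S False = Rx X S (predk b' x) (predk a y)" using lk_eq[OF a(2) a(1) sX, of S] by simp
  show ?thesis using e1 e2 unfolding HRyx by (cases ob) (simp_all add: pt_def)
qed

definition Ptrue :: "(nat \<times> bool) set" where
  "Ptrue = {(S, ob). S \<in> PS \<and> M S (fst (pt ob)) (snd (pt ob))}"

abbreviation "T \<equiv> Tf b XY lx ly cx cy lk"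

lemma pt_range: "1 \<le> fst (pt ob) \<and> fst (pt ob) \<le> y \<and> 1 \<le> snd (pt ob) \<and> snd (pt ob) \<le> y"
  using x1 xy by (auto simp: pt_def)

lemma pt_eq: "pt ob = pt ob' \<or> ob = ob' \<or> \<not> y \<le> x"
  using xy by (auto simp: pt_def)

lemma symX_Ptrue: "symX Ptrue"
  unfolding symX_def Ptrue_def pt_def using xy by auto

lemma Rx_Ptrue: "Rx Ptrue S p q = M S p q"
proof (cases "(p, q) = (x, y)")
  case True
  have "((S, False) \<in> Ptrue) = M S x y" unfolding Ptrue_def pt_def using LM_PS[of lt y mx S x y] by auto
  then show ?thesis using True unfolding Rx_def if_P[OF True] by simp
next
  case False
  show ?thesis
  proof (cases "(p, q) = (y, x)")
    case True
    have "((S, True) \<in> Ptrue) = M S y x" unfolding Ptrue_def pt_def using LM_PS[of lt y mx S y x] by auto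
    then show ?thesis using True unfolding Rx_def if_not_P[OF False] if_P[OF True] by simp
  next
    case False2: False
    show ?thesis unfolding Rx_def if_not_P[OF False] if_not_P[OF False2] ..
  qed
qed

lemma symX_T: "symX (T X)"
  unfolding symX_def Tf_def mem_Collect_eq prod.case by simp

lemma Rx_mono: "X \<subseteq> Y \<Longrightarrow> Rx X S p q \<Longrightarrow> Rx Y S p q"
proof -
  assume XY: "X \<subseteq> Y" and r: "Rx X S p q"
  show ?thesis
  proof (cases "(p, q) = (x, y)")
    case True then show ?thesis using XY r unfolding Rx_def if_P[OF True] by blast
  next
    case False
    then show ?thesis
    proof (cases "(p, q) = (y, x)")
      case True then show ?thesis using XY r unfolding Rx_def if_not_P[OF False] if_P[OF True] by blast
    next
      case False2: False then show ?thesis using r unfolding Rx_def if_not_P[OF False] if_not_P[OF False2] by blast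
    qed
  qed
qed

lemma Rx_pt: "symX X \<Longrightarrow> Rx X S (fst (pt ob)) (snd (pt ob)) = ((S, ob) \<in> X)"
proof -
  assume sX: "symX X"
  show ?thesis
  proof (cases ob)
    case False then show ?thesis unfolding pt_def Rx_def by simp
  next
    case True
    show ?thesis
    proof (cases "x = y")
      case True2: True then show ?thesis using sX True unfolding pt_def Rx_def symX_def by simp
    next
      case False
      then have n: "(y, x) \<noteq> (x, y)" by simp
      have p: "pt ob = (y, x)" using True by (simp add: pt_def)
      show ?thesis using True unfolding p Rx_def if_not_P[OF n] fst_conv snd_conv if_P[OF refl] by simp
    qed
  qed
qed

lemma heval_cl: "cl \<in> set \<Phi> \<Longrightarrow> symX X \<Longrightarrow>
   (\<forall>h\<in>set (fst cl). heval b XY lx ly cx cy (lk X) ob h) = (\<forall>h\<in>set (fst cl). hh lt mx (Rx X) (fst (pt ob)) (snd (pt ob)) h)"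
  using heval_eq hoff_le by blast

lemma lfp_le: "lfp T \<subseteq> Ptrue"
proof (rule lfp_lowerbound, rule subsetI)
  fix z assume "z \<in> T Ptrue"
  then obtain S ob ob' cl where z: "z = (S, ob)" "ob' = ob \<or> XY" "cl \<in> set \<Phi>" "snd cl = Some S"
    "\<forall>h\<in>set (fst cl). heval b XY lx ly cx cy (lk Ptrue) ob' h"
    unfolding Tf_def by blast
  have RP: "Rx Ptrue = M" by (intro ext) (rule Rx_Ptrue)
  have "\<forall>h\<in>set (fst cl). hh lt mx M (fst (pt ob')) (snd (pt ob')) h"
    using z(5) heval_cl[OF z(3) symX_Ptrue, of ob'] unfolding RP by simp
  then have m: "M S (fst (pt ob')) (snd (pt ob'))"
    using isModelD[OF LM_model _ _ _ _ z(3) z(4)] pt_range by blast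
  have "pt ob' = pt ob" using pt_eq[of ob' ob] z(2) by auto
  moreover have "S \<in> PS" using z(3,4) unfolding PS_def by blast
  ultimately show "z \<in> Ptrue" using m z(1) unfolding Ptrue_def by auto
qed

lemma lfp_eq: "lfp T = Ptrue"
proof
  show "lfp T \<subseteq> Ptrue" by (rule lfp_le)
  define X0 where "X0 = lfp T"
  have fix0: "T X0 = X0" unfolding X0_def using lfp_unfold[OF Tf_mono] by simp
  have sym0: "symX X0" using symX_T[of X0] fix0 by simp
  have le0: "X0 \<subseteq> Ptrue" unfolding X0_def by (rule lfp_le)
  have mod: "isModel lt y mx (Rx X0)"
    unfolding isModel_def
  proof (intro allI impI)
    fix x' y' cl S assume a: "1 \<le> x'" "x' \<le> y" "1 \<le> y'" "y' \<le> y" "cl \<in> set \<Phi>" "snd cl = Some S"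
      and h: "\<forall>h\<in>set (fst cl). hh lt mx (Rx X0) x' y' h"
    show "Rx X0 S x' y'"
    proof (cases "\<exists>ob. (x', y') = pt ob")
      case True
      then obtain ob where ob: "x' = fst (pt ob)" "y' = snd (pt ob)" by (metis fst_conv snd_conv)
      have "\<forall>h\<in>set (fst cl). heval b XY lx ly cx cy (lk X0) ob h"
        using h heval_cl[OF a(5) sym0, of ob] ob by simp
      then have "(S, ob) \<in> T X0" unfolding Tf_def using a(5,6) by blast
      then have "(S, ob) \<in> X0" using fix0 by simp
      then show ?thesis using Rx_pt[OF sym0, of S ob] ob by simp
    next
      case False
      have RP: "Rx Ptrue = M" by (intro ext) (rule Rx_Ptrue)
      have "\<forall>h\<in>set (fst cl). hh lt mx M x' y' h"
      proof
        fix hy assume "hy \<in> set (fst cl)"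
        then have "hh lt mx (Rx X0) x' y' hy" using h by blast
        then show "hh lt mx M x' y' hy" by (rule hh_mono) (metis Rx_mono[OF le0] RP)
      qed
      then have "M S x' y'" using isModelD[OF LM_model a(1-6)] by blast
      moreover have "(x', y') \<noteq> pt False" "(x', y') \<noteq> pt True" using False by blast+
      then have "(x', y') \<noteq> (x, y)" "(x', y') \<noteq> (y, x)" unfolding pt_def by simp_all
      ultimately show ?thesis unfolding Rx_def if_not_P[OF \<open>(x', y') \<noteq> (x, y)\<close>] if_not_P[OF \<open>(x', y') \<noteq> (y, x)\<close>] by blast
    qed
  qed
  show "Ptrue \<subseteq> X0"
  proof
    fix z assume "z \<in> Ptrue"
    then obtain S ob where z: "z = (S, ob)" "M S (fst (pt ob)) (snd (pt ob))" unfolding Ptrue_def by blast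
    then have "Rx X0 S (fst (pt ob)) (snd (pt ob))" using LM_least[OF mod] by blast
    then show "z \<in> X0" using Rx_pt[OF sym0] z by simp
  qed
qed

lemma fw_eq: "(\<exists>cl\<in>set \<Phi>. snd cl = None \<and> (\<forall>h\<in>set (fst cl). heval b XY lx ly cx cy (lk Ptrue) ob h))
   = fires lt mx M (fst (pt ob)) (snd (pt ob))"
proof -
  have RP: "Rx Ptrue = M" by (intro ext) (rule Rx_Ptrue)
  show ?thesis unfolding fires_def using heval_cl[OF _ symX_Ptrue, of _ ob] unfolding RP by blast
qed

lemma lx_eq: "lx = map (\<lambda>i. lt (predk i x)) [0..<Suc K]"
proof (rule nth_equalityI)
  show "length lx = length (map (\<lambda>i. lt (predk i x)) [0..<Suc K])" by (simp add: Flx_def min_def)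
  fix i assume "i < length lx"
  then have "i \<le> K" by (simp add: Flx_def split: if_splits)
  then show "lx ! i = map (\<lambda>i. lt (predk i x)) [0..<Suc K] ! i" using lx_nth
    by (simp del: upt_Suc)
qed

lemma ly_eq: "ly = map (\<lambda>j. lt (predk j y)) [0..<Suc K]"
proof (rule nth_equalityI)
  show "length ly = length (map (\<lambda>j. lt (predk j y)) [0..<Suc K])" by (simp add: Fly_def Flx_def min_def)
  fix i assume "i < length ly"
  then have "i \<le> K" by (simp add: Fly_def Flx_def split: if_splits)
  then show "ly ! i = map (\<lambda>j. lt (predk j y)) [0..<Suc K] ! i" using ly_nth
    by (simp del: upt_Suc)
qed

lemma facts_eq: "{(i, j, S, ob). i \<le> K \<and> j \<le> K \<and> S \<in> PS \<and> lk Ptrue i j S ob} =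
  {(i, j, S, ob). i \<le> K \<and> j \<le> K \<and> S \<in> PS \<and> (if ob then M S (predk j y) (predk i x) else M S (predk i x) (predk j y))}"
  using lk_eq[OF _ _ symX_Ptrue] Rx_Ptrue by auto

abbreviation "badsem \<equiv> (\<exists>p q. 1 \<le> p \<and> p \<le> q \<and> p \<le> x \<and> q \<le> y \<and> (fires lt mx M p q \<or> fires lt mx M q p))"

lemma fp: "1 \<le> p \<Longrightarrow> p \<le> y - 1 \<Longrightarrow> 1 \<le> q \<Longrightarrow> q \<le> y - 1 \<Longrightarrow>
   fires lt mx M p q = fires lt (\<lambda>p. False \<and> p = y - 1) (LM lt (y - 1) (\<lambda>p. False \<and> p = y - 1)) p q"
  by (rule fires_prefix) auto

lemma bad_eq: "(fires lt mx M x y \<or> fires lt mx M y x \<or> (\<not> X1 \<and> gbad left) \<or> (\<not> XY \<and> gbad down)) = badsem"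
proof
  assume "fires lt mx M x y \<or> fires lt mx M y x \<or> (\<not> X1 \<and> gbad left) \<or> (\<not> XY \<and> gbad down)"
  then consider "fires lt mx M x y \<or> fires lt mx M y x" | "\<not> X1 \<and> gbad left" | "\<not> XY \<and> gbad down" by blast
  then show badsem
  proof cases
    case 1 then show ?thesis using x1 xy by blast
  next
    case 2
    then have "gbad (Vs lt y b (x - 1))" using left by auto
    then obtain p q where "1 \<le> p" "p \<le> q" "p \<le> x - 1" "q \<le> y" "fires lt mx M p q \<or> fires lt mx M q p"
      unfolding Vs_def by auto
    then show ?thesis by (intro exI[of _ p] exI[of _ q]) auto
  next
    case 3
    then have "gbad (Vs lt (y - 1) False x)" using down by auto
    then obtain p q where pq: "1 \<le> p" "p \<le> q" "p \<le> x" "q \<le> y - 1"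
      "fires lt (\<lambda>p. False \<and> p = y - 1) (LM lt (y - 1) (\<lambda>p. False \<and> p = y - 1)) p q \<or>
       fires lt (\<lambda>p. False \<and> p = y - 1) (LM lt (y - 1) (\<lambda>p. False \<and> p = y - 1)) q p"
      unfolding Vs_def by auto
    have "fires lt mx M p q \<or> fires lt mx M q p"
      using pq fp[of p q] fp[of q p] by auto
    then show ?thesis using pq by (intro exI[of _ p] exI[of _ q]) auto
  qed
next
  assume badsem
  then obtain p q where pq: "1 \<le> p" "p \<le> q" "p \<le> x" "q \<le> y" "fires lt mx M p q \<or> fires lt mx M q p" by blast
  show "fires lt mx M x y \<or> fires lt mx M y x \<or> (\<not> X1 \<and> gbad left) \<or> (\<not> XY \<and> gbad down)"
  proof (cases "p < x")
    case True
    then have l: "left = Vs lt y b (x - 1)" using left pq by auto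
    have "gbad left" unfolding l Vs_def gv.sel by (rule exI[of _ p], rule exI[of _ q]) (use pq True in auto)
    then show ?thesis using True pq by auto
  next
    case False
    then have px: "p = x" using pq by auto
    show ?thesis
    proof (cases "q = y")
      case True then show ?thesis using pq px by auto
    next
      case False2: False
      then have xy': "x < y" using pq px by auto
      then have d: "down = Vs lt (y - 1) False x" using down by auto
      have "fires lt (\<lambda>p. False \<and> p = y - 1) (LM lt (y - 1) (\<lambda>p. False \<and> p = y - 1)) p q \<or>
       fires lt (\<lambda>p. False \<and> p = y - 1) (LM lt (y - 1) (\<lambda>p. False \<and> p = y - 1)) q p"
        using pq False2 fp[of p q] fp[of q p] by auto
      then have "gbad down" unfolding d Vs_def gv.sel by (rule_tac exI[of _ p], rule_tac exI[of _ q]) (use pq px False2 in auto)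
      then show ?thesis using xy' by auto
    qed
  qed
qed

lemma Vs_rec: "Vs lt y b x = F X1 XY b (lt x) (lt y) left down"
proof -
  have P: "lfp T = Ptrue" by (rule lfp_eq)
  have "F X1 XY b (lt x) (lt y) left down = GV {(i, j, S, ob). i \<le> K \<and> j \<le> K \<and> S \<in> PS \<and> lk Ptrue i j S ob} lx ly cx cy
     ((\<exists>cl\<in>set \<Phi>. snd cl = None \<and> (\<forall>h\<in>set (fst cl). heval b XY lx ly cx cy (lk Ptrue) False h)) \<or>
      (\<exists>cl\<in>set \<Phi>. snd cl = None \<and> (\<forall>h\<in>set (fst cl). heval b XY lx ly cx cy (lk Ptrue) True h)) \<or>
      (\<not> X1 \<and> gbad left) \<or> (\<not> XY \<and> gbad down))"
    unfolding F_def Let_def P ..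
  also have "\<dots> = Vs lt y b x"
    unfolding facts_eq fw_eq
    unfolding pt_def fst_conv snd_conv if_True if_False bad_eq
    unfolding lx_eq ly_eq cx_eq cy_eq Vs_def ..
  finally show ?thesis by simp
qed

end


context horn
begin

lemma Vr_Vs: "1 \<le> x \<Longrightarrow> x \<le> y \<Longrightarrow> Vr F d w x y b = Vs (\<lambda>p. w ! (p - 1)) y b x"
proof (induction "x + y" arbitrary: x y b rule: less_induct)
  case less
  let ?lt = "\<lambda>p. w ! (p - 1)"
  define left where "left = (if x \<le> 1 then d else Vr F d w (x - 1) y b)"
  define down where "down = (if y \<le> x then d else Vr F d w x (y - 1) False)"
  have l: "2 \<le> x \<Longrightarrow> left = Vs ?lt y b (x - 1)" unfolding left_def using less by auto
  have dn: "x < y \<Longrightarrow> down = Vs ?lt (y - 1) False x" unfolding down_def using less by auto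
  interpret p: horn_pt \<Phi> ?lt y b x left down
    by unfold_locales (use less l dn in auto)
  have "Vr F d w x y b = F (x \<le> 1) (y \<le> x) b (?lt x) (?lt y) left down"
    unfolding left_def down_def by (simp add: Vr.simps[of F d w x y b])
  also have "\<dots> = Vs ?lt y b x" using p.Vs_rec by simp
  finally show ?case .
qed

definition Vals :: "'a gv set" where
  "Vals = {v. gfacts v \<subseteq> {..K} \<times> {..K} \<times> PS \<times> UNIV \<and> length (glx v) = Suc K \<and> length (gly v) = Suc K \<and>
     gcx v \<le> K + 2 \<and> gcy v \<le> K + 2}"

lemma F_Vals: "F x1 xy b a c left down \<in> Vals"
  unfolding Vals_def F_def Let_def by (auto simp: Flx_def Fly_def Fcx_def Fcy_def min_def)

lemma finite_Vals:
  assumes "finite (UNIV :: 'a set)"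
  shows "finite Vals"
proof -
  let ?LS = "{xs :: 'a list. set xs \<subseteq> UNIV \<and> length xs = Suc K}"
  let ?B = "Pow ({..K} \<times> {..K} \<times> PS \<times> (UNIV :: bool set)) \<times> ?LS \<times> ?LS \<times> {..K+2} \<times> {..K+2} \<times> (UNIV :: bool set)"
  have fB: "finite ?B"
    using finite_PS assms by (intro finite_cartesian_product finite_Pow_iff[THEN iffD2] finite_lists_length_eq) auto
  have "Vals \<subseteq> (\<lambda>(a, b, c, d, e, f). GV a b c d e f) ` ?B"
  proof
    fix v assume v: "v \<in> Vals"
    show "v \<in> (\<lambda>(a, b, c, d, e, f). GV a b c d e f) ` ?B"
      by (rule image_eqI[where x = "(gfacts v, glx v, gly v, gcx v, gcy v, gbad v)"]) (use v in \<open>auto simp: Vals_def\<close>)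
  qed
  then show ?thesis using fB by (rule finite_subset[OF _ finite_imageI])
qed

end

lemma horn_imp_RT:
  fixes L :: "('a::finite) list set"
  assumes "pred_ESO_HORN L"
  shows "RealTime_CA L"
proof -
  obtain \<Phi> :: "'a horn_formula" where L: "L = {w. w \<noteq> [] \<and> models w \<Phi>}"
    using assms unfolding pred_ESO_HORN_def by blast
  interpret horn \<Phi> .
  let ?d = "GV {} [] [] 0 0 False :: 'a gv"
  show ?thesis
  proof (rule grid_RT[where f = F and Vals = Vals and d = ?d and A = "{v. \<not> gbad v}"])
    show "finite Vals" by (rule finite_Vals) simp
    show "\<forall>x1 xy b a c l dn. F x1 xy b a c l dn \<in> Vals" using F_Vals by blast
    show "\<forall>w. w \<noteq> [] \<longrightarrow> (w \<in> L) = (Vr F ?d w (length w) (length w) True \<in> {v. \<not> gbad v})"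
    proof (intro allI impI)
      fix w :: "'a list" assume ne: "w \<noteq> []"
      let ?n = "length w" and ?lt = "\<lambda>p. w ! (p - 1)"
      have n1: "1 \<le> ?n" using ne by (simp add: Suc_le_eq)
      have e: "Vr F ?d w ?n ?n True = Vs ?lt ?n True ?n" using Vr_Vs[OF n1] by simp
      have mx: "(\<lambda>p. True \<and> p = ?n) = (\<lambda>p. p = ?n)" by simp
      have "gbad (Vs ?lt ?n True ?n) \<longleftrightarrow> (\<exists>x y. 1 \<le> x \<and> x \<le> ?n \<and> 1 \<le> y \<and> y \<le> ?n \<and>
          fires ?lt (\<lambda>p. p = ?n) (LM ?lt ?n (\<lambda>p. p = ?n)) x y)"
      proof
        assume "gbad (Vs ?lt ?n True ?n)"
        then obtain p q where pq: "1 \<le> p" "p \<le> q" "q \<le> ?n"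
          "fires ?lt (\<lambda>p. p = ?n) (LM ?lt ?n (\<lambda>p. p = ?n)) p q \<or> fires ?lt (\<lambda>p. p = ?n) (LM ?lt ?n (\<lambda>p. p = ?n)) q p"
          unfolding Vs_def gv.sel mx by auto
        from pq(4) show "\<exists>x y. 1 \<le> x \<and> x \<le> ?n \<and> 1 \<le> y \<and> y \<le> ?n \<and> fires ?lt (\<lambda>p. p = ?n) (LM ?lt ?n (\<lambda>p. p = ?n)) x y"
        proof
          assume "fires ?lt (\<lambda>p. p = ?n) (LM ?lt ?n (\<lambda>p. p = ?n)) p q"
          then show ?thesis by (rule_tac exI[of _ p], rule_tac exI[of _ q]) (use pq in auto)
        next
          assume "fires ?lt (\<lambda>p. p = ?n) (LM ?lt ?n (\<lambda>p. p = ?n)) q p"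
          then show ?thesis by (rule_tac exI[of _ q], rule_tac exI[of _ p]) (use pq in auto)
        qed
      next
        assume "\<exists>x y. 1 \<le> x \<and> x \<le> ?n \<and> 1 \<le> y \<and> y \<le> ?n \<and> fires ?lt (\<lambda>p. p = ?n) (LM ?lt ?n (\<lambda>p. p = ?n)) x y"
        then obtain x y where xy: "1 \<le> x" "x \<le> ?n" "1 \<le> y" "y \<le> ?n" "fires ?lt (\<lambda>p. p = ?n) (LM ?lt ?n (\<lambda>p. p = ?n)) x y"
          by blast
        show "gbad (Vs ?lt ?n True ?n)" unfolding Vs_def gv.sel mx
        proof (cases "x \<le> y")
          case True
          show "\<exists>p q. 1 \<le> p \<and> p \<le> q \<and> p \<le> ?n \<and> q \<le> ?n \<and>
            (fires ?lt (\<lambda>p. p = ?n) (LM ?lt ?n (\<lambda>p. p = ?n)) p q \<or> fires ?lt (\<lambda>p. p = ?n) (LM ?lt ?n (\<lambda>p. p = ?n)) q p)"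
            by (rule exI[of _ x], rule exI[of _ y]) (use xy True in auto)
        next
          case False
          show "\<exists>p q. 1 \<le> p \<and> p \<le> q \<and> p \<le> ?n \<and> q \<le> ?n \<and>
            (fires ?lt (\<lambda>p. p = ?n) (LM ?lt ?n (\<lambda>p. p = ?n)) p q \<or> fires ?lt (\<lambda>p. p = ?n) (LM ?lt ?n (\<lambda>p. p = ?n)) q p)"
            by (rule exI[of _ y], rule exI[of _ x]) (use xy False in auto)
        qed
      qed
      then show "(w \<in> L) = (Vr F ?d w ?n ?n True \<in> {v. \<not> gbad v})"
        unfolding e L using models_iff[OF ne] ne by simp
    qed
  qed
qed

theorem theorem1:
  fixes L :: "('a::finite) list set"
  assumes "L \<subseteq> {w. w \<noteq> []}"
  shows "RealTime_CA L \<longleftrightarrow> pred_ESO_HORN L"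
  using RT_imp_horn[OF assms] horn_imp_RT by blast

end
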